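(* Consider the three-species system $$\begin{cases}\partial_tx_1+\partial_ax_1=-\big(\mu_1(a)+\int_0^Ag_1x_2\,da+u(t)\big)x_1,\\ \partial_tx_2+\partial_ax_2=-\big(\mu_2(a)+\int_0^Ag_2x_3\,da\big)x_2,\\ \partial_tx_3+\partial_ax_3=-\big(\mu_3(a)+\int_0^Ag_3x_1\,da\big)x_3,\\ x_i(0,t)=\int_0^Ak_i(a)x_i(a,t)da,\quad x_i(a,0)=x_{i,0}(a),\ i=1,2,3,\end{cases}$$ on $(0,A)\times\mathbb R_+$, with a positive steady state $x^*_i$ as described below, and a positive solution. Define $\Pi_i(x_i(t))=\langle\pi_{0,i},x_i(t)\rangle_{L^2(0,A)}/\langle\pi_{0,i},x_i^*\rangle_{L^2(0,A)}$, $\eta_i(t)=\ln\Pi_i(x_i(t))$ and $\psi_i(t-a)=\frac{x_i(a,t)}{x_i^*(a)\Pi_i(x_i(t))}-1$. Then $$\begin{aligned}\dot\eta_1&=\zeta_1-u(t)-e^{\eta_2}\int_0^Ag_1(a)x_2^*(a)(1+\psi_2(t-a))da,\\ \dot\eta_2&=\zeta_2-e^{\eta_3}\int_0^Ag_2(a)x_3^*(a)(1+\psi_3(t-a))da,\\ \dot\eta_3&=\zeta_3-e^{\eta_1}\int_0^Ag_3(a)x_1^*(a)(1+\psi_1(t-a))da,\end{aligned}$$ $\psi_i(t)=\int_0^A\tilde k_i(a)\psi_i(t-a)da$, with $\eta_i(0)=\ln\Pi_i(x_{i,0})$, $\psi_i(-a)=\frac{x_{i,0}(a)}{x_i^*(a)\Pi_i(x_{i,0})}-1$,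 and the solution is given by $x_i(a,t)=x_i^*(a)(1+\psi_i(t-a))e^{\eta_i(t)}$.
   Context: Kernels $g_i\in L^2(0,A)$, $g_i\ge0$; mortalities $\mu_i\ge0$, locally integrable, $\int_0^A\mu_i=\infty$; fertilities $k_i\in L^\infty$, $k_i\ge0$. For a constant control $u^*$, the steady state is $x_i^*(a)=x_i^*(0)e^{-\int_0^a(\mu_i(s)+\zeta_i)ds}$, where $\zeta_i$ is the unique real number with $\int_0^A\tilde k_i(a)da=1$, $\tilde k_i(a)=k_i(a)e^{-\int_0^a(\mu_i(s)+\zeta_i)ds}$, and $\zeta_1=\int_0^Ag_1x_2^*+u^*$, $\zeta_2=\int_0^Ag_2x_3^*$, $\zeta_3=\int_0^Ag_3x_1^*$. The adjoint functions are $\pi_{0,i}(a)=\int_a^Ak_i(s)e^{-\int_a^s(\zeta_i+\mu_i(l))dl}ds$. *)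

theory Defs
  imports "HOL-Analysis.Analysis"
begin

definition L2on :: "real \<Rightarrow> (real \<Rightarrow> real) \<Rightarrow> bool" where
  "L2on A f \<longleftrightarrow> set_borel_measurable lborel {0..A} f
      \<and> set_integrable lborel {0..A} (\<lambda>a. (f a)\<^sup>2)"

definition Linfon :: "real \<Rightarrow> (real \<Rightarrow> real) \<Rightarrow> bool" where
  "Linfon A f \<longleftrightarrow> set_borel_measurable lborel {0..A} f
      \<and> (\<exists>C. AE a in lborel. a \<in> {0..A} \<longrightarrow> \<bar>f a\<bar> \<le> C)"

definition locint :: "real \<Rightarrow> (real \<Rightarrow> real) \<Rightarrow> bool" where
  "locint A f \<longleftrightarrow> (\<forall>b. 0 \<le> b \<and> b < A \<longrightarrow> set_integrable lborel {0..b} f)"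

definition ktilde :: "(real \<Rightarrow> real) \<Rightarrow> real \<Rightarrow> (real \<Rightarrow> real) \<Rightarrow> real \<Rightarrow> real" where
  "ktilde mu z k a = k a * exp (- (LINT s:{0..a}|lborel. mu s + z))"

definition pi0 :: "real \<Rightarrow> (real \<Rightarrow> real) \<Rightarrow> real \<Rightarrow> (real \<Rightarrow> real) \<Rightarrow> real \<Rightarrow> real" where
  "pi0 A mu z k a = (LINT s:{a..A}|lborel. k s * exp (- (LINT l:{a..s}|lborel. z + mu l)))"

definition PiF :: "real \<Rightarrow> (real \<Rightarrow> real) \<Rightarrow> real \<Rightarrow> (real \<Rightarrow> real) \<Rightarrow> (real \<Rightarrow> real)
    \<Rightarrow> (real \<Rightarrow> real) \<Rightarrow> real" where
  "PiF A mu z k xs f = (LINT a:{0..A}|lborel. pi0 A mu z k a * f a)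
                      / (LINT a:{0..A}|lborel. pi0 A mu z k a * xs a)"

definition eta :: "real \<Rightarrow> (real \<Rightarrow> real) \<Rightarrow> real \<Rightarrow> (real \<Rightarrow> real) \<Rightarrow> (real \<Rightarrow> real)
    \<Rightarrow> (real \<Rightarrow> real \<Rightarrow> real) \<Rightarrow> real \<Rightarrow> real" where
  "eta A mu z k xs x t = ln (PiF A mu z k xs (\<lambda>a. x a t))"

definition steady_profile :: "real \<Rightarrow> (real \<Rightarrow> real) \<Rightarrow> real \<Rightarrow> (real \<Rightarrow> real) \<Rightarrow> bool" where
  "steady_profile A mu z xs \<longleftrightarrow> xs 0 > 0 \<and>
     (\<forall>a. 0 \<le> a \<and> a < A \<longrightarrow> xs a = xs 0 * exp (- (LINT s:{0..a}|lborel. mu s + z)))"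

text \<open>Solution (in C([0,oo); L2(0,A)), along characteristics) of
  d_t x + d_a x = -(mu(a) + W(t)) x,  x(0,t) = int_0^A k x(.,t),  x(a,0) = x0(a).
  x a t is the density at age a and time t.\<close>
definition char_solution :: "real \<Rightarrow> (real \<Rightarrow> real) \<Rightarrow> (real \<Rightarrow> real) \<Rightarrow> (real \<Rightarrow> real)
    \<Rightarrow> (real \<Rightarrow> real \<Rightarrow> real) \<Rightarrow> (real \<Rightarrow> real) \<Rightarrow> bool" where
  "char_solution A mu k W x x0 \<longleftrightarrow>
     (\<forall>t\<ge>0. L2on A (\<lambda>a. x a t)) \<and>
     (\<forall>t\<ge>0. ((\<lambda>s. LINT a:{0..A}|lborel. (x a s - x a t)\<^sup>2) \<longlongrightarrow> 0) (at t within {0..})) \<and>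
     (\<forall>a t s. 0 \<le> a \<and> a < A \<and> 0 \<le> t \<and> 0 \<le> s \<and> a + s < A \<longrightarrow>
        x (a + s) (t + s) = x a t * exp (- ((LINT r:{a..a+s}|lborel. mu r)
                                           + (LINT r:{0..s}|lborel. W (t + r))))) \<and>
     (\<forall>t\<ge>0. x 0 t = (LINT a:{0..A}|lborel. k a * x a t)) \<and>
     (\<forall>a. 0 < a \<and> a < A \<longrightarrow> x a 0 = x0 a)"

end

theory Submission
  imports Defs "HOL-Analysis.Analysis"
begin


lemma meas_except:
  fixes f g :: "real \<Rightarrow> real"
  assumes "finite S" "\<And>x. x \<notin> S \<Longrightarrow> f x = g x" "f \<in> borel_measurable lborel"
  shows "g \<in> borel_measurable lborel"
proof -
  have "g = (\<lambda>x. f x + (\<Sum>s\<in>S. indicator {s} x * (g s - f s)))"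
  proof
    fix x show "g x = f x + (\<Sum>s\<in>S. indicator {s} x * (g s - f s))"
    proof (cases "x \<in> S")
      case True
      have "(\<Sum>s\<in>S. indicator {s} x * (g s - f s)) = (\<Sum>s\<in>{x}. indicator {s} x * (g s - f s))"
        using True assms(1) by (intro sum.mono_neutral_right) (auto simp: indicator_def)
      then show ?thesis by simp
    next
      case False
      have "(\<Sum>s\<in>S. indicator {s} x * (g s - f s)) = 0"
        using False by (intro sum.neutral) (auto simp: indicator_def)
      then show ?thesis using assms(2)[OF False] by simp
    qed
  qed
  also have "\<dots> \<in> borel_measurable lborel" using assms(3) by measurable
  finally show ?thesis .
qed

lemma AE_notin_finite: "finite (S::real set) \<Longrightarrow> AE x in lborel. x \<notin> S"
  by (intro AE_I'[where N=S]) (auto intro: finite_imp_null_set_lborel)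

lemma integral_eq_except:
  fixes f g :: "real \<Rightarrow> real"
  assumes "finite S" "\<And>x. x \<notin> S \<Longrightarrow> f x = g x"
  shows "integral\<^sup>L lborel f = integral\<^sup>L lborel g"
proof (cases "f \<in> borel_measurable lborel")
  case True
  then have g: "g \<in> borel_measurable lborel" using meas_except assms by blast
  show ?thesis
    using AE_notin_finite[OF assms(1)] assms(2) True g
    by (intro integral_cong_AE) auto
next
  case False
  then have "g \<notin> borel_measurable lborel" using meas_except[of S g f] assms by metis
  then show ?thesis using False by (metis borel_measurable_integrable not_integrable_integral_eq)
qed


lemma abs_prod_le: "\<bar>(a::real) * b\<bar> \<le> a\<^sup>2 + b\<^sup>2"
proof -
  have "0 \<le> (\<bar>a\<bar> - \<bar>b\<bar>)\<^sup>2" by simp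
  then have "2 * (\<bar>a\<bar> * \<bar>b\<bar>) \<le> a\<^sup>2 + b\<^sup>2" by (simp add: power2_eq_square algebra_simps)
  moreover have "0 \<le> \<bar>a\<bar> * \<bar>b\<bar>" by simp
  ultimately show ?thesis unfolding abs_mult by linarith
qed

lemma L2_meas: "L2on A f \<Longrightarrow> (\<lambda>a. indicator {0..A} a * f a) \<in> borel_measurable lborel"
  unfolding L2on_def set_borel_measurable_def by simp

lemma L2_sq_int: "L2on A f \<Longrightarrow> integrable lborel (\<lambda>a. indicator {0..A} a * (f a)\<^sup>2)"
  unfolding L2on_def set_integrable_def by simp

lemma ind_int: "integrable lborel (\<lambda>a::real. indicator {0..A} a * (c::real))"
proof -
  have "integrable lborel (\<lambda>a::real. indicator {0..A} a *\<^sub>R c)"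
    by (intro borel_integrable_compact) auto
  then show ?thesis by simp
qed

lemma L2_prod_int:
  assumes f: "L2on A f" and g: "L2on A g"
  shows "integrable lborel (\<lambda>a. indicator {0..A} a * (f a * g a))"
proof (rule Bochner_Integration.integrable_bound)
  show "integrable lborel (\<lambda>a. indicator {0..A} a * (f a)\<^sup>2 + indicator {0..A} a * (g a)\<^sup>2)"
    using L2_sq_int[OF f] L2_sq_int[OF g] by (rule Bochner_Integration.integrable_add)
  have "(\<lambda>a. (indicator {0..A} a * f a) * (indicator {0..A} a * g a)) \<in> borel_measurable lborel"
    using L2_meas[OF f] L2_meas[OF g] by measurable
  moreover have "(\<lambda>a. (indicator {0..A} a * f a) * (indicator {0..A} a * g a)) = (\<lambda>a. indicator {0..A} a * (f a * g a))"
    by (auto simp: indicator_def fun_eq_iff)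
  ultimately show "(\<lambda>a. indicator {0..A} a * (f a * g a)) \<in> borel_measurable lborel"
    by simp
  show "AE x in lborel. norm (indicator {0..A} x * (f x * g x))
       \<le> norm (indicator {0..A} x * (f x)\<^sup>2 + indicator {0..A} x * (g x)\<^sup>2)"
  proof (intro AE_I2)
    fix x
    have "\<bar>f x * g x\<bar> \<le> (f x)\<^sup>2 + (g x)\<^sup>2"
      by (rule abs_prod_le)
    then show "norm (indicator {0..A} x * (f x * g x))
       \<le> norm (indicator {0..A} x * (f x)\<^sup>2 + indicator {0..A} x * (g x)\<^sup>2)"
      by (auto simp: indicator_def)
  qed
qed

lemma L2_const: "L2on A (\<lambda>a. c)"
  unfolding L2on_def set_borel_measurable_def set_integrable_def
  using ind_int[of A "c\<^sup>2"] by simp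

lemma L2_int:
  assumes f: "L2on A f"
  shows "integrable lborel (\<lambda>a. indicator {0..A} a * f a)"
  using L2_prod_int[OF f L2_const[of A 1]] by simp

lemma L2_diff:
  assumes f: "L2on A f" and g: "L2on A g"
  shows "L2on A (\<lambda>a. f a - g a)"
proof -
  have m: "(\<lambda>a. indicator {0..A} a * (f a - g a)) \<in> borel_measurable lborel"
    using L2_meas[OF f] L2_meas[OF g] by (simp add: right_diff_distrib)
  have "integrable lborel (\<lambda>a. indicator {0..A} a * (f a)\<^sup>2 - 2 * (indicator {0..A} a * (f a * g a)) + indicator {0..A} a * (g a)\<^sup>2)"
    using L2_sq_int[OF f] L2_sq_int[OF g] L2_prod_int[OF f g] by auto
  moreover have "(\<lambda>a. indicator {0..A} a * (f a)\<^sup>2 - 2 * (indicator {0..A} a * (f a * g a)) + indicator {0..A} a * (g a)\<^sup>2)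
     = (\<lambda>a. indicator {0..A} a * (f a - g a)\<^sup>2)"
    by (auto simp: indicator_def power2_eq_square algebra_simps)
  ultimately show ?thesis using m
    unfolding L2on_def set_borel_measurable_def set_integrable_def by simp
qed

lemma discr:
  fixes G I H :: real
  assumes "\<And>l. 0 \<le> l\<^sup>2 * G + 2 * l * I + H"
  shows "I\<^sup>2 \<le> G * H"
proof (cases "G = 0")
  case True
  show ?thesis
  proof (cases "I = 0")
    case False
    have "0 \<le> (-(H+1)/(2*I))\<^sup>2 * G + 2 * (-(H+1)/(2*I)) * I + H" by (rule assms)
    then show ?thesis using True False by (simp add: field_simps)
  qed (use True assms[of 0] in auto)
next
  case False
  have G: "G \<ge> 0"
  proof (rule ccontr)
    assume "\<not> G \<ge> 0"
    then have Gn: "G < 0" by simp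
    define X where "X = 2 * \<bar>I\<bar> + \<bar>H\<bar> + 1"
    define l where "l = X / (-G) + 1"
    have X0: "X \<ge> 1" by (simp add: X_def)
    have "X / (-G) \<ge> 0" using Gn X0 by (intro divide_nonneg_pos) auto
    then have l1: "l \<ge> 1" by (simp add: l_def)
    have "l * (-G) = X + (-G)"
      using Gn unfolding l_def by (simp add: field_simps)
    then have lG: "l * (-G) \<ge> X" using Gn by simp
    have "l * (l * (-G)) \<ge> l * X" using l1 lG by (intro mult_left_mono) auto
    moreover have "l * X = 2 * (l * \<bar>I\<bar>) + l * \<bar>H\<bar> + l" by (simp add: X_def algebra_simps)
    moreover have "l * \<bar>I\<bar> \<ge> l * I" using l1 by (intro mult_left_mono) auto
    moreover have "l * \<bar>H\<bar> \<ge> \<bar>H\<bar>" using l1 by (simp add: mult_le_cancel_right1)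
    moreover have "\<bar>H\<bar> \<ge> H" by simp
    moreover have "0 \<le> l\<^sup>2 * G + 2 * l * I + H" by (rule assms)
    moreover have "l\<^sup>2 * G = - (l * (l * (-G)))" by (simp add: power2_eq_square)
    ultimately show False using l1 by linarith
  qed
  then have Gp: "G > 0" using False by simp
  have "0 \<le> (-I/G)\<^sup>2 * G + 2 * (-I/G) * I + H" by (rule assms)
  then have "0 \<le> H - I\<^sup>2 / G" using Gp by (simp add: power2_eq_square field_simps)
  then show ?thesis using Gp by (simp add: field_simps)
qed

lemma CS:
  assumes f: "L2on A f" and g: "L2on A g"
  shows "(LINT a:{0..A}|lborel. f a * g a)\<^sup>2 \<le> (LINT a:{0..A}|lborel. (f a)\<^sup>2) * (LINT a:{0..A}|lborel. (g a)\<^sup>2)"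
proof -
  have "\<And>l. 0 \<le> l\<^sup>2 * (LINT a:{0..A}|lborel. (f a)\<^sup>2) + 2 * l * (LINT a:{0..A}|lborel. f a * g a) + (LINT a:{0..A}|lborel. (g a)\<^sup>2)"
  proof -
    fix l :: real
    have "0 \<le> (LINT a|lborel. indicator {0..A} a * (l * f a + g a)\<^sup>2)"
      by (intro integral_nonneg_AE) auto
    also have "(\<lambda>a. indicator {0..A} a * (l * f a + g a)\<^sup>2) = (\<lambda>a. l\<^sup>2 * (indicator {0..A} a * (f a)\<^sup>2) + 2 * l * (indicator {0..A} a * (f a * g a)) + indicator {0..A} a * (g a)\<^sup>2)"
      by (auto simp: indicator_def power2_eq_square algebra_simps)
    also have "(LINT a|lborel. l\<^sup>2 * (indicator {0..A} a * (f a)\<^sup>2) + 2 * l * (indicator {0..A} a * (f a * g a)) + indicator {0..A} a * (g a)\<^sup>2)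
      = l\<^sup>2 * (LINT a|lborel. indicator {0..A} a * (f a)\<^sup>2) + 2 * l * (LINT a|lborel. indicator {0..A} a * (f a * g a)) + (LINT a|lborel. indicator {0..A} a * (g a)\<^sup>2)"
      using L2_sq_int[OF f] L2_sq_int[OF g] L2_prod_int[OF f g] by simp
    finally show "0 \<le> l\<^sup>2 * (LINT a:{0..A}|lborel. (f a)\<^sup>2) + 2 * l * (LINT a:{0..A}|lborel. f a * g a) + (LINT a:{0..A}|lborel. (g a)\<^sup>2)"
      by (simp add: set_lebesgue_integral_def)
  qed
  then show ?thesis by (rule discr)
qed


lemma Linf_L2:
  assumes "Linfon A k" shows "L2on A k"
proof -
  obtain C where C: "AE a in lborel. a \<in> {0..A} \<longrightarrow> \<bar>k a\<bar> \<le> C"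
    and m: "(\<lambda>a. indicator {0..A} a * k a) \<in> borel_measurable lborel"
    using assms unfolding Linfon_def set_borel_measurable_def by auto
  have m2: "(\<lambda>a. indicator {0..A} a * (k a)\<^sup>2) \<in> borel_measurable lborel"
  proof -
    have "(\<lambda>a. (indicator {0..A} a * k a)\<^sup>2) \<in> borel_measurable lborel" using m by measurable
    moreover have "(\<lambda>a. (indicator {0..A} a * k a)\<^sup>2) = (\<lambda>a. indicator {0..A} a * (k a)\<^sup>2)"
      by (auto simp: indicator_def fun_eq_iff power2_eq_square)
    ultimately show ?thesis by simp
  qed
  have "integrable lborel (\<lambda>a. indicator {0..A} a * (k a)\<^sup>2)"
  proof (rule Bochner_Integration.integrable_bound[OF ind_int[of A "C\<^sup>2"] m2])
    show "AE x in lborel. norm (indicator {0..A} x * (k x)\<^sup>2) \<le> norm (indicator {0..A} x * C\<^sup>2)"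
      using C
    proof (eventually_elim)
      case (elim x)
      show ?case
      proof (cases "x \<in> {0..A}")
        case True
        then have "\<bar>k x\<bar> \<le> C" using elim by auto
        then have "(k x)\<^sup>2 \<le> C\<^sup>2" by (metis abs_ge_zero order_trans power2_abs power_mono)
        then show ?thesis using True by auto
      qed auto
    qed
  qed
  then show ?thesis using m unfolding L2on_def set_borel_measurable_def set_integrable_def by simp
qed

lemma cont_pair:
  fixes x :: "real \<Rightarrow> real \<Rightarrow> real"
  assumes g: "L2on A g" and xc: "\<forall>t\<ge>0. L2on A (\<lambda>a. x a t)"
    and tc: "\<forall>t\<ge>0. ((\<lambda>s. LINT a:{0..A}|lborel. (x a s - x a t)\<^sup>2) \<longlongrightarrow> 0) (at t within {0..})"
  shows "continuous_on {0..} (\<lambda>t. LINT a:{0..A}|lborel. g a * x a t)"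
  unfolding continuous_on_def
proof (intro ballI)
  fix t :: real assume "t \<in> {0..}"
  then have t: "t \<ge> 0" by simp
  define I where "I s = (LINT a:{0..A}|lborel. g a * x a s)" for s
  define G where "G = (LINT a:{0..A}|lborel. (g a)\<^sup>2)"
  define H where "H s = (LINT a:{0..A}|lborel. (x a s - x a t)\<^sup>2)" for s
  have ev: "eventually (\<lambda>s. norm (I s - I t) \<le> sqrt (G * H s)) (at t within {0..})"
  proof -
    have "eventually (\<lambda>s. s \<in> {0..}) (at t within {0..})" by (simp add: eventually_at_filter)
    then show ?thesis
    proof (eventually_elim)
      case (elim s)
      then have s: "s \<ge> 0" by simp
      have "I s - I t = (LINT a|lborel. indicator {0..A} a * (g a * x a s) - indicator {0..A} a * (g a * x a t))"
        unfolding I_def set_lebesgue_integral_def real_scaleR_def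
        by (rule Bochner_Integration.integral_diff[symmetric, OF L2_prod_int[OF g xc[rule_format, OF s]] L2_prod_int[OF g xc[rule_format, OF t]]])
      also have "(\<lambda>a. indicator {0..A} a * (g a * x a s) - indicator {0..A} a * (g a * x a t)) = (\<lambda>a. indicator {0..A} a * (g a * (x a s - x a t)))"
        by (simp add: fun_eq_iff right_diff_distrib)
      also have "(LINT a|lborel. indicator {0..A} a * (g a * (x a s - x a t))) = (LINT a:{0..A}|lborel. g a * (x a s - x a t))"
        unfolding set_lebesgue_integral_def by simp
      finally have eq: "I s - I t = (LINT a:{0..A}|lborel. g a * (x a s - x a t))" .
      have "(I s - I t)\<^sup>2 \<le> G * H s"
        unfolding eq G_def H_def
        by (rule CS[OF g L2_diff[OF xc[rule_format, OF s] xc[rule_format, OF t]]])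
      then have "sqrt ((I s - I t)\<^sup>2) \<le> sqrt (G * H s)" by (rule real_sqrt_le_mono)
      then show ?case by simp
    qed
  qed
  have "((\<lambda>s. sqrt (G * H s)) \<longlongrightarrow> sqrt (G * 0)) (at t within {0..})"
    using tc[rule_format, OF t] unfolding H_def by (intro tendsto_intros)
  then have "((\<lambda>s. sqrt (G * H s)) \<longlongrightarrow> 0) (at t within {0..})" by simp
  then have "((\<lambda>s. I s - I t) \<longlongrightarrow> 0) (at t within {0..})"
    by (rule Lim_null_comparison[OF ev])
  then have "((\<lambda>s. (I s - I t) + I t) \<longlongrightarrow> 0 + I t) (at t within {0..})"
    by (intro tendsto_intros)
  then show "((\<lambda>s. LINT a:{0..A}|lborel. g a * x a s) \<longlongrightarrow> (LINT a:{0..A}|lborel. g a * x a t)) (at t within {0..})"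
    unfolding I_def[symmetric] by simp
qed


lemma set_int_split:
  fixes f :: "real \<Rightarrow> real"
  assumes f: "set_integrable lborel {a..c} f" and ab: "a \<le> b" and bc: "b \<le> c"
  shows "(LINT s:{a..c}|lborel. f s) = (LINT s:{a..b}|lborel. f s) + (LINT s:{b..c}|lborel. f s)"
proof -
  have f1: "set_integrable lborel {a..b} f" by (rule set_integrable_subset[OF f]) (use ab bc in auto)
  have f2: "set_integrable lborel {b..c} f" by (rule set_integrable_subset[OF f]) (use ab bc in auto)
  have "(LINT s:{a..b}|lborel. f s) + (LINT s:{b..c}|lborel. f s)
      = (LINT s|lborel. indicator {a..b} s * f s + indicator {b..c} s * f s)"
    using f1 f2 unfolding set_lebesgue_integral_def set_integrable_def by simp
  also have "\<dots> = (LINT s|lborel. indicator {a..c} s * f s)"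
    by (rule integral_eq_except[of "{b}"]) (use ab bc in \<open>auto simp: indicator_def\<close>)
  finally show ?thesis unfolding set_lebesgue_integral_def by simp
qed

lemma set_int_const_ivl: "a \<le> b \<Longrightarrow> (LINT s:{a..b}|lborel. (c::real)) = c * (b - a)"
  by (simp add: set_integral_const)

lemma set_integrable_const_ivl: "set_integrable lborel {a..b::real} (\<lambda>s. c::real)"
  unfolding set_integrable_def by (intro borel_integrable_compact) auto

lemma set_int_plus_const:
  fixes f :: "real \<Rightarrow> real"
  assumes f: "set_integrable lborel {a..b} f" and ab: "a \<le> b"
  shows "(LINT s:{a..b}|lborel. f s + c) = (LINT s:{a..b}|lborel. f s) + c * (b - a)"
    and "(LINT s:{a..b}|lborel. c + f s) = c * (b - a) + (LINT s:{a..b}|lborel. f s)"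
proof -
  show "(LINT s:{a..b}|lborel. f s + c) = (LINT s:{a..b}|lborel. f s) + c * (b - a)"
    using set_integral_add(2)[OF f set_integrable_const_ivl[of a b c]] set_int_const_ivl[OF ab] by simp
  show "(LINT s:{a..b}|lborel. c + f s) = c * (b - a) + (LINT s:{a..b}|lborel. f s)"
    using set_integral_add(2)[OF set_integrable_const_ivl[of a b c] f] set_int_const_ivl[OF ab] by simp
qed


locale sp =
  fixes A z :: real and mu k xs W x0 :: "real \<Rightarrow> real" and x :: "real \<Rightarrow> real \<Rightarrow> real"
  assumes A_pos: "A > 0"
  and mu_nonneg: "\<forall>a\<in>{0..A}. mu a \<ge> 0"
  and mu_loc: "locint A mu"
  and k_Linf: "Linfon A k"
  and k_nonneg: "\<forall>a\<in>{0..A}. k a \<ge> 0"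
  and steady: "steady_profile A mu z xs"
  and kt_one: "(LINT a:{0..A}|lborel. ktilde mu z k a) = 1"
  and W_cont: "continuous_on {0..} W"
  and sol: "char_solution A mu k W x x0"
  and pos: "\<forall>a t. 0 \<le> a \<and> a < A \<and> 0 \<le> t \<longrightarrow> x a t > 0"
begin

definition "M b = (LINT s:{0..b}|lborel. mu s)"
definition "WI t = (LINT r:{0..t}|lborel. W r)"

lemma mu_int: "0 \<le> b \<Longrightarrow> b < A \<Longrightarrow> set_integrable lborel {0..b} mu"
  using mu_loc unfolding locint_def by auto

lemma mu_int2: "0 \<le> a \<Longrightarrow> b < A \<Longrightarrow> set_integrable lborel {a..b} mu"
proof (cases "a \<le> b")
  case True
  assume "0 \<le> a" "b < A"
  then show ?thesis using mu_int[of b] True by (auto intro: set_integrable_subset[OF mu_int[of b]])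
next
  case False
  then have "{a..b} = {}" by auto
  then show ?thesis unfolding set_integrable_def by simp
qed

lemma M_split: "0 \<le> a \<Longrightarrow> a \<le> b \<Longrightarrow> b < A \<Longrightarrow> M b = M a + (LINT s:{a..b}|lborel. mu s)"
  unfolding M_def by (rule set_int_split[OF mu_int]) auto

lemma Iab_nonneg: "0 \<le> a \<Longrightarrow> b \<le> A \<Longrightarrow> (LINT s:{a..b}|lborel. mu s) \<ge> 0"
  unfolding set_lebesgue_integral_def
  using mu_nonneg by (intro integral_nonneg_AE AE_I2) (auto simp: indicator_def)

lemma M_nonneg: "0 \<le> a \<Longrightarrow> a \<le> A \<Longrightarrow> M a \<ge> 0"
  unfolding set_lebesgue_integral_def M_def
  using mu_nonneg by (intro integral_nonneg_AE AE_I2) (auto simp: indicator_def)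

lemma M_mono: "0 \<le> a \<Longrightarrow> a \<le> b \<Longrightarrow> b < A \<Longrightarrow> M a \<le> M b"
  using M_split[of a b] Iab_nonneg[of a b] by auto

lemma G_eq: "0 \<le> a \<Longrightarrow> a < A \<Longrightarrow> (LINT s:{0..a}|lborel. mu s + z) = M a + z * a"
  unfolding M_def using set_int_plus_const(1)[OF mu_int[of a], of z] by simp

lemma P_eq: "0 \<le> a \<Longrightarrow> a \<le> s \<Longrightarrow> s < A \<Longrightarrow> (LINT l:{a..s}|lborel. z + mu l) = z * (s - a) + (LINT l:{a..s}|lborel. mu l)"
  using set_int_plus_const(2)[OF mu_int2[of a s], of z] by simp

lemma xs0_pos: "xs 0 > 0" using steady unfolding steady_profile_def by auto

lemma xs_eq: "0 \<le> a \<Longrightarrow> a < A \<Longrightarrow> xs a = xs 0 * exp (- (M a + z * a))"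
proof -
  assume a: "0 \<le> a" "a < A"
  have "\<forall>a. 0 \<le> a \<and> a < A \<longrightarrow> xs a = xs 0 * exp (- (LINT s:{0..a}|lborel. mu s + z))"
    using steady unfolding steady_profile_def by blast
  then have "xs a = xs 0 * exp (- (LINT s:{0..a}|lborel. mu s + z))" using a by blast
  then show ?thesis using G_eq[OF a] by simp
qed

lemma xs_pos: "0 \<le> a \<Longrightarrow> a < A \<Longrightarrow> xs a > 0"
proof -
  assume "0 \<le> a" "a < A"
  then have "xs a = xs 0 * exp (- (M a + z * a))" by (rule xs_eq)
  then show ?thesis using xs0_pos by simp
qed

lemma kt_eq: "0 \<le> a \<Longrightarrow> a < A \<Longrightarrow> ktilde mu z k a = k a * xs a / xs 0"
proof -
  assume a: "0 \<le> a" "a < A"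
  have "xs a = xs 0 * exp (- (M a + z * a))" using a by (rule xs_eq)
  then show ?thesis unfolding ktilde_def using G_eq[OF a] xs0_pos by simp
qed

lemma kt_nonneg: "0 \<le> a \<Longrightarrow> a \<le> A \<Longrightarrow> ktilde mu z k a \<ge> 0"
  unfolding ktilde_def using k_nonneg by auto

end


context sp begin

lemma char: "0 \<le> a \<Longrightarrow> a < A \<Longrightarrow> 0 \<le> t \<Longrightarrow> 0 \<le> s \<Longrightarrow> a + s < A \<Longrightarrow>
   x (a + s) (t + s) = x a t * exp (- ((LINT r:{a..a+s}|lborel. mu r) + (LINT r:{0..s}|lborel. W (t + r))))"
  using sol unfolding char_solution_def by blast

lemma xL2: "t \<ge> 0 \<Longrightarrow> L2on A (\<lambda>a. x a t)"
  using sol unfolding char_solution_def by blast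

lemma x_cont: "\<forall>t\<ge>0. ((\<lambda>s. LINT a:{0..A}|lborel. (x a s - x a t)\<^sup>2) \<longlongrightarrow> 0) (at t within {0..})"
  using sol unfolding char_solution_def by blast

lemma bdry: "t \<ge> 0 \<Longrightarrow> x 0 t = (LINT a:{0..A}|lborel. k a * x a t)"
  using sol unfolding char_solution_def by blast

lemma init: "0 < a \<Longrightarrow> a < A \<Longrightarrow> x a 0 = x0 a"
  using sol unfolding char_solution_def by blast

lemma W_int: "0 \<le> a \<Longrightarrow> set_integrable lborel {a..b} W"
  unfolding set_integrable_def
  by (intro borel_integrable_compact) (auto intro: continuous_on_subset[OF W_cont])

lemma WI_hk: "0 \<le> t \<Longrightarrow> WI t = integral {0..t} W"
  unfolding WI_def by (rule set_borel_integral_eq_integral(2)[OF W_int]) simp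

lemma shift: "0 \<le> t \<Longrightarrow> 0 \<le> s \<Longrightarrow> (LINT r:{0..s}|lborel. W (t + r)) = WI (t + s) - WI t"
proof -
  assume t: "0 \<le> t" and s: "0 \<le> s"
  have c: "continuous_on {0..s} (\<lambda>r. W (t + r))"
    using t by (intro continuous_on_compose2[OF W_cont]) (auto intro!: continuous_intros)
  have "(LINT r:{0..s}|lborel. W (t + r)) = integral {0..s} (\<lambda>r. W (t + r))"
    apply (rule set_borel_integral_eq_integral(2))
    unfolding set_integrable_def using c by (intro borel_integrable_compact) auto
  also have "\<dots> = integral {0..s} (W \<circ> ((+) t))" by (simp add: o_def)
  also have "\<dots> = integral {0+t..s+t} W" by (rule integral_shift_Icc_real)
  also have "\<dots> = integral {0..t+s} W - integral {0..t} W"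
    using Henstock_Kurzweil_Integration.integral_combine[where a=0 and c=t and b="t+s" and f=W] t s
      integrable_continuous_real[OF continuous_on_subset[OF W_cont, of "{0..t+s}"]]
    by (auto simp: add.commute)
  finally show ?thesis using WI_hk t s by simp
qed

lemma WI0: "WI 0 = 0"
  using WI_hk[of 0] by simp

lemma WI_deriv: "0 \<le> t \<Longrightarrow> (WI has_real_derivative W t) (at t within {0..})"
proof -
  assume t: "0 \<le> t"
  have "((\<lambda>u. integral {0..u} W) has_real_derivative W t) (at t within {0..t+1})"
    using t by (intro integral_has_real_derivative continuous_on_subset[OF W_cont]) auto
  then have "(WI has_real_derivative W t) (at t within {0..t+1})"
    by (rule has_field_derivative_transform_within[where d=1]) (use t WI_hk in auto)
  moreover have "at t within {0..t+1} = at t within {0..}"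
    by (rule at_within_nhd[where S="{t - 1 <..< t + 1}"]) auto
  ultimately show ?thesis by simp
qed

end


lemma integrable_eq_except:
  fixes f g :: "real \<Rightarrow> real"
  assumes "finite S" "\<And>x. x \<notin> S \<Longrightarrow> f x = g x" "integrable lborel f"
  shows "integrable lborel g"
proof -
  have "g \<in> borel_measurable lborel" using meas_except[OF assms(1,2)] assms(3) by auto
  then show ?thesis
    using AE_notin_finite[OF assms(1)] assms(2,3)
    by (intro integrable_cong_AE_imp[OF assms(3)]) auto
qed

context sp begin

definition "E t = exp (z * t - WI t)"
definition "v a t = x a t / (xs a * E t)"
definition "phi r = (if 0 \<le> r then v 0 r else if - A < r then v (- r) 0 else 0)"

lemma E_pos: "E t > 0" unfolding E_def by simp
lemma E0: "E 0 = 1" unfolding E_def using WI0 by simp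

lemma v_formula: "0 \<le> a \<Longrightarrow> a < A \<Longrightarrow> v a t = x a t * exp (M a + z * a - z * t + WI t) / xs 0"
proof -
  assume a: "0 \<le> a" "a < A"
  have "xs a * E t = xs 0 * (exp (- (M a + z * a)) * exp (z * t - WI t))"
    using xs_eq[OF a] unfolding E_def by simp
  also have "exp (- (M a + z * a)) * exp (z * t - WI t) = exp (- (M a + z * a - z * t + WI t))"
    by (simp add: exp_add[symmetric])
  finally have "xs a * E t = xs 0 * exp (- (M a + z * a - z * t + WI t))" .
  moreover have "exp (- (M a + z * a - z * t + WI t)) = 1 / exp (M a + z * a - z * t + WI t)"
    by (subst exp_minus) (simp only: inverse_eq_divide)
  ultimately have "xs a * E t = xs 0 / exp (M a + z * a - z * t + WI t)" by simp
  then show ?thesis unfolding v_def using xs0_pos by simp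
qed

lemma v_pos: "0 \<le> a \<Longrightarrow> a < A \<Longrightarrow> 0 \<le> t \<Longrightarrow> v a t > 0"
  unfolding v_def using pos xs_pos E_pos by simp

lemma v_shift:
  assumes a: "0 \<le> a" "a < A" and t: "0 \<le> t" and s: "0 \<le> s" and as: "a + s < A"
  shows "v (a + s) (t + s) = v a t"
proof -
  have ch: "x (a + s) (t + s) = x a t * exp (- ((M (a + s) - M a) + (WI (t + s) - WI t)))"
    using char[OF a t s as] M_split[of a "a+s"] shift[OF t s] a s as by simp
  have "v (a + s) (t + s) = x a t * (exp (- ((M (a + s) - M a) + (WI (t + s) - WI t))) *
        exp (M (a + s) + z * (a + s) - z * (t + s) + WI (t + s))) / xs 0"
    using v_formula[of "a+s" "t+s"] ch a s as by simp
  also have "exp (- ((M (a + s) - M a) + (WI (t + s) - WI t))) *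
        exp (M (a + s) + z * (a + s) - z * (t + s) + WI (t + s)) = exp (M a + z * a - z * t + WI t)"
    by (simp add: exp_add[symmetric] algebra_simps)
  finally show ?thesis using v_formula[OF a, of t] by simp
qed

lemma v_phi: "0 \<le> a \<Longrightarrow> a < A \<Longrightarrow> 0 \<le> t \<Longrightarrow> v a t = phi (t - a)"
proof -
  assume a: "0 \<le> a" "a < A" and t: "0 \<le> t"
  show ?thesis
  proof (cases "a \<le> t")
    case True
    have "v (0 + a) (t - a + a) = v 0 (t - a)"
      by (rule v_shift) (use a t True in auto)
    then show ?thesis unfolding phi_def using True by simp
  next
    case False
    have "v (a - t + t) (0 + t) = v (a - t) 0"
      by (rule v_shift) (use a t False in auto)
    then show ?thesis unfolding phi_def using False a t by simp
  qed
qed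

lemma phi_pos: "- A < r \<Longrightarrow> phi r > 0"
  unfolding phi_def using v_pos A_pos by auto

lemma phi_nonneg: "phi r \<ge> 0"
proof (cases "- A < r")
  case True then show ?thesis using phi_pos[OF True] by simp
next
  case False
  then have "\<not> 0 \<le> r" using A_pos by auto
  then show ?thesis using False unfolding phi_def by simp
qed

end


context sp begin

definition "kt s = indicator {0..A} s * ktilde mu z k s"

lemma kt_int: "set_integrable lborel {0..A} (ktilde mu z k)"
proof (rule ccontr)
  assume "\<not> set_integrable lborel {0..A} (ktilde mu z k)"
  then have "(LINT a:{0..A}|lborel. ktilde mu z k a) = 0"
    unfolding set_integrable_def set_lebesgue_integral_def by (rule not_integrable_integral_eq)
  then show False using kt_one by simp
qed

lemma kt_integrable: "integrable lborel kt"
  using kt_int unfolding set_integrable_def kt_def by simp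

lemma kt_meas[measurable]: "kt \<in> borel_measurable borel"
  using borel_measurable_integrable[OF kt_integrable] by simp

lemma kt_nonneg': "kt s \<ge> 0"
  unfolding kt_def using kt_nonneg by (auto simp: indicator_def)

definition "mup s = indicator {0..<A} s * mu s"

lemma mup_meas[measurable]: "mup \<in> borel_measurable borel"
proof (rule measurable_piecewise_restrict2[where A="\<lambda>n. if n = 0 then - {0..<A} else {0..A - A / (real n + 1)}"])
  fix n :: nat
  show "(if n = 0 then - {0..<A} else {0..A - A / (real n + 1)}) \<in> sets borel" by auto
  show "\<exists>h\<in>borel_measurable borel. \<forall>s\<in>(if n = 0 then - {0..<A} else {0..A - A / (real n + 1)}). mup s = h s"
  proof (cases "n = 0")
    case True
    then show ?thesis by (intro bexI[where x="\<lambda>_. 0"]) (auto simp: mup_def)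
  next
    case False
    define b where "b = A - A / (real n + 1)"
    have b0: "0 \<le> b"
    proof -
      have "A / (real n + 1) \<le> A / 1" using A_pos by (intro divide_left_mono) auto
      then show ?thesis unfolding b_def by simp
    qed
    have bA: "b < A" unfolding b_def using A_pos by simp
    have "(\<lambda>s. indicator {0..b} s * mu s) \<in> borel_measurable lborel"
      using borel_measurable_integrable[OF mu_int[OF b0 bA, unfolded set_integrable_def]] by simp
    then have m: "(\<lambda>s. indicator {0..b} s * mu s) \<in> borel_measurable borel" by simp
    show ?thesis using False bA
      by (intro bexI[OF _ m]) (auto simp: mup_def b_def indicator_def)
  qed
next
  show "space borel = (\<Union>n. if n = 0 then - {0..<A} else {0..A - A / (real n + 1)})"
  proof -
    have "\<exists>n. s \<in> (if n = 0 then - {0..<A} else {0..A - A / (real n + 1)})" for s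
    proof (cases "0 \<le> s \<and> s < A")
      case False then show ?thesis by (intro exI[of _ 0]) auto
    next
      case True
      then have s0: "0 \<le> s" "s < A" by auto
      obtain n :: nat where n: "A / (A - s) < real n" using reals_Archimedean2 by blast
      have "0 < A / (A - s)" using s0 A_pos by simp
      then have n0: "n \<noteq> 0" using n by (intro notI) simp
      have "A / (A - s) < real n + 1" using n by simp
      then have "A < (real n + 1) * (A - s)" using s0 by (simp add: field_simps)
      then have "A / (real n + 1) < A - s" by (simp add: field_simps)
      then show ?thesis using n0 s0 by (intro exI[of _ n]) auto
    qed
    then show ?thesis unfolding space_borel by blast
  qed
qed

definition "Mp a = (LINT s|lborel. indicator {0..a} s * mup s)"

lemma Mp_meas[measurable]: "Mp \<in> borel_measurable borel"
proof -
  have "(\<lambda>a. LINT s|lborel. indicator {0..a} s * mup s) \<in> borel_measurable lborel"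
  proof (rule lborel.borel_measurable_lebesgue_integral)
    have "(\<lambda>p::real\<times>real. of_bool (0 \<le> snd p \<and> snd p \<le> fst p) * mup (snd p)) \<in> borel_measurable (lborel \<Otimes>\<^sub>M lborel)"
      by measurable
    then show "(\<lambda>(a, s). indicator {0..a} s * mup s) \<in> borel_measurable (lborel \<Otimes>\<^sub>M lborel)"
      by (simp add: indicator_def case_prod_beta)
  qed
  then show ?thesis unfolding Mp_def[abs_def] by simp
qed

lemma Mp_eq: "0 \<le> a \<Longrightarrow> a < A \<Longrightarrow> Mp a = M a"
  unfolding Mp_def M_def set_lebesgue_integral_def
  by (rule arg_cong[where f="integral\<^sup>L lborel"]) (auto simp: mup_def indicator_def fun_eq_iff)

definition "xsinv a = indicator {0..<A} a * exp (Mp a + z * a) / xs 0"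

lemma xsinv_meas[measurable]: "xsinv \<in> borel_measurable borel"
  unfolding xsinv_def[abs_def] by measurable

lemma xsinv_eq: "0 \<le> a \<Longrightarrow> a < A \<Longrightarrow> xsinv a = 1 / xs a"
proof -
  assume a: "0 \<le> a" "a < A"
  have "xs a = xs 0 * exp (- (M a + z * a))" using a by (rule xs_eq)
  moreover have "exp (M a + z * a) * exp (- (M a + z * a)) = 1" by (simp add: mult_exp_exp)
  ultimately show ?thesis unfolding xsinv_def using a Mp_eq[OF a] xs0_pos by (simp add: field_simps)
qed

definition "h0 a = indicator {0..A} a * x a 0"

lemma h0_meas[measurable]: "h0 \<in> borel_measurable borel"
  using L2_meas[OF xL2[of 0]] unfolding h0_def[abs_def] by simp

lemma xb_cont: "continuous_on {0..} (\<lambda>r. x 0 r)"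
proof -
  have "continuous_on {0..} (\<lambda>t. LINT a:{0..A}|lborel. k a * x a t)"
    by (rule cont_pair[OF Linf_L2[OF k_Linf]]) (use xL2 x_cont in auto)
  then show ?thesis by (rule continuous_on_cong[THEN iffD1, rotated 2]) (auto simp: bdry)
qed

lemma WI_cont: "continuous_on {0..} WI"
  unfolding continuous_on_eq_continuous_within
  using WI_deriv DERIV_continuous by blast

lemma E_cont: "continuous_on {0..} E"
  unfolding E_def[abs_def] by (intro continuous_intros WI_cont)

lemma v0_cont: "continuous_on {0..} (\<lambda>r. v 0 r)"
proof -
  have "E r \<noteq> 0" for r using E_pos[of r] by simp
  then show ?thesis unfolding v_def using xs0_pos by (intro continuous_intros xb_cont E_cont) auto
qed

lemma phi_alt: "phi r = indicator {0..} r * v 0 r + indicator {-A<..<0} r * (h0 (- r) * xsinv (- r))"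
proof -
  consider "0 \<le> r" | "- A < r" "r < 0" | "r \<le> - A" by linarith
  then show ?thesis
  proof cases
    case 2
    then have "h0 (- r) * xsinv (- r) = x (- r) 0 / xs (- r)"
      unfolding h0_def using xsinv_eq[of "- r"] by (simp add: indicator_def)
    then show ?thesis using 2 unfolding phi_def v_def by (simp add: E0 indicator_def)
  qed (auto simp: phi_def indicator_def)
qed

lemma phi_meas[measurable]: "phi \<in> borel_measurable borel"
proof -
  have m1: "(\<lambda>r. indicator {0..} r *\<^sub>R v 0 r) \<in> borel_measurable borel"
    by (intro borel_measurable_continuous_on_indicator v0_cont) auto
  then have m1': "(\<lambda>r. indicator {0..} r * v 0 r) \<in> borel_measurable borel" by simp
  have u: "(\<lambda>r::real. - r) \<in> borel_measurable borel" by measurable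
  have m2: "(\<lambda>r. h0 (- r)) \<in> borel_measurable borel"
    using measurable_compose[OF u h0_meas] by (simp add: o_def)
  have m3: "(\<lambda>r. xsinv (- r)) \<in> borel_measurable borel"
    using measurable_compose[OF u xsinv_meas] by (simp add: o_def)
  have m4: "(\<lambda>r. indicator {-A<..<0} r * (h0 (- r) * xsinv (- r))) \<in> borel_measurable borel"
    using m2 m3 by (intro borel_measurable_times borel_measurable_indicator) auto
  have "(\<lambda>r. indicator {0..} r * v 0 r + indicator {-A<..<0} r * (h0 (- r) * xsinv (- r))) \<in> borel_measurable borel"
    by (rule borel_measurable_add[OF m1' m4])
  then show ?thesis by (simp add: phi_alt[abs_def])
qed

end


lemma ind_pair_meas[measurable]:
  "(\<lambda>p::real\<times>real. indicator {fst p..A} (snd p) :: ennreal) \<in> borel_measurable (lborel \<Otimes>\<^sub>M lborel)"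
proof -
  have "(\<lambda>p::real\<times>real. of_bool (fst p \<le> snd p \<and> snd p \<le> A) :: ennreal) \<in> borel_measurable (lborel \<Otimes>\<^sub>M lborel)"
    by measurable
  then show ?thesis by (simp add: indicator_def)
qed

context sp begin

definition "Phi al be = (\<integral>\<^sup>+ r. indicator {al..be} r * ennreal (phi r) \<partial>lborel)"
definition "Qr a = (LINT s:{a..A}|lborel. ktilde mu z k s)"
definition "L T = (\<integral>\<^sup>+ a. indicator {0..A} a * ennreal (Qr a) * ennreal (phi (T - a)) \<partial>lborel)"

lemma kt_zero: "s \<notin> {0..A} \<Longrightarrow> kt s = 0" unfolding kt_def by simp

lemma Qr_int: "0 \<le> a \<Longrightarrow> Qr a = (LINT s|lborel. indicator {a..A} s * kt s)"
  unfolding Qr_def set_lebesgue_integral_def kt_def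
  by (rule arg_cong[where f="integral\<^sup>L lborel"]) (auto simp: indicator_def fun_eq_iff)

lemma Qr_integrable: "integrable lborel (\<lambda>s. indicator {a..A} s * kt s)"
  using integrable_mult_indicator[OF _ kt_integrable, of "{a..A}"] by simp

lemma Qr_nonneg: "0 \<le> a \<Longrightarrow> Qr a \<ge> 0"
  unfolding Qr_int using kt_nonneg' by (auto intro!: integral_nonneg_AE)

lemma Qr_enn: "0 \<le> a \<Longrightarrow> ennreal (Qr a) = (\<integral>\<^sup>+ s. indicator {a..A} s * ennreal (kt s) \<partial>lborel)"
proof -
  assume a: "0 \<le> a"
  have "(\<integral>\<^sup>+ s. ennreal (indicator {a..A} s * kt s) \<partial>lborel) = ennreal (LINT s|lborel. indicator {a..A} s * kt s)"
    by (rule nn_integral_eq_integral[OF Qr_integrable]) (use kt_nonneg' in auto)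
  moreover have "(\<lambda>s. ennreal (indicator {a..A} s * kt s)) = (\<lambda>s. indicator {a..A} s * ennreal (kt s))"
    by (auto simp: indicator_def fun_eq_iff)
  ultimately show ?thesis using Qr_int[OF a] by simp
qed

lemma subst1: "(\<integral>\<^sup>+ a. indicator {0..s} a * ennreal (phi (T - a)) \<partial>lborel) = Phi (T - s) T"
proof -
  have "Phi (T - s) T = (\<integral>\<^sup>+ a. indicator {T - s..T} (T + (-1) * a) * ennreal (phi (T + (-1) * a)) \<partial>lborel)"
    unfolding Phi_def using nn_integral_real_affine[of "\<lambda>r. indicator {T - s..T} r * ennreal (phi r)" "-1" T] by simp
  also have "\<dots> = (\<integral>\<^sup>+ a. indicator {0..s} a * ennreal (phi (T - a)) \<partial>lborel)"
    by (auto intro!: nn_integral_cong simp: indicator_def)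
  finally show ?thesis by simp
qed

lemma subst2: "(\<integral>\<^sup>+ r. indicator {tau..T} r * ennreal (phi (r - s)) \<partial>lborel) = Phi (tau - s) (T - s)"
proof -
  have "Phi (tau - s) (T - s) = (\<integral>\<^sup>+ r. indicator {tau - s..T - s} (- s + 1 * r) * ennreal (phi (- s + 1 * r)) \<partial>lborel)"
    unfolding Phi_def using nn_integral_real_affine[of "\<lambda>r. indicator {tau - s..T - s} r * ennreal (phi r)" 1 "- s"] by simp
  also have "\<dots> = (\<integral>\<^sup>+ r. indicator {tau..T} r * ennreal (phi (r - s)) \<partial>lborel)"
    by (auto intro!: nn_integral_cong simp: indicator_def)
  finally show ?thesis by simp
qed

lemma L_eq1: "L T = (\<integral>\<^sup>+ s. ennreal (kt s) * Phi (T - s) T \<partial>lborel)"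
proof -
  have "L T = (\<integral>\<^sup>+ a. \<integral>\<^sup>+ s. indicator {0..A} a * ennreal (phi (T - a)) * (indicator {a..A} s * ennreal (kt s)) \<partial>lborel \<partial>lborel)"
    unfolding L_def
  proof (rule nn_integral_cong)
    fix a :: real
    show "indicator {0..A} a * ennreal (Qr a) * ennreal (phi (T - a)) =
      (\<integral>\<^sup>+ s. indicator {0..A} a * ennreal (phi (T - a)) * (indicator {a..A} s * ennreal (kt s)) \<partial>lborel)"
    proof (cases "a \<in> {0..A}")
      case True
      have "(\<integral>\<^sup>+ s. indicator {0..A} a * ennreal (phi (T - a)) * (indicator {a..A} s * ennreal (kt s)) \<partial>lborel)
         = indicator {0..A} a * ennreal (phi (T - a)) * (\<integral>\<^sup>+ s. indicator {a..A} s * ennreal (kt s) \<partial>lborel)"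
        by (rule nn_integral_cmult) measurable
      also have "\<dots> = indicator {0..A} a * ennreal (phi (T - a)) * ennreal (Qr a)"
        using Qr_enn[of a] True by simp
      finally show ?thesis by (simp add: ac_simps)
    qed simp
  qed
  also have "\<dots> = (\<integral>\<^sup>+ s. \<integral>\<^sup>+ a. indicator {0..A} a * ennreal (phi (T - a)) * (indicator {a..A} s * ennreal (kt s)) \<partial>lborel \<partial>lborel)"
    by (rule lborel_pair.Fubini'[symmetric]) measurable
  also have "\<dots> = (\<integral>\<^sup>+ s. ennreal (kt s) * Phi (T - s) T \<partial>lborel)"
  proof (rule nn_integral_cong)
    fix s :: real
    show "(\<integral>\<^sup>+ a. indicator {0..A} a * ennreal (phi (T - a)) * (indicator {a..A} s * ennreal (kt s)) \<partial>lborel) = ennreal (kt s) * Phi (T - s) T"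
    proof (cases "s \<in> {0..A}")
      case True
      have "(\<integral>\<^sup>+ a. indicator {0..A} a * ennreal (phi (T - a)) * (indicator {a..A} s * ennreal (kt s)) \<partial>lborel)
        = (\<integral>\<^sup>+ a. ennreal (kt s) * (indicator {0..s} a * ennreal (phi (T - a))) \<partial>lborel)"
        using True by (intro nn_integral_cong) (auto simp: indicator_def mult.commute)
      also have "\<dots> = ennreal (kt s) * (\<integral>\<^sup>+ a. indicator {0..s} a * ennreal (phi (T - a)) \<partial>lborel)"
        by (rule nn_integral_cmult) measurable
      finally show ?thesis using subst1 by simp
    next
      case False
      then show ?thesis using kt_zero[OF False] by simp
    qed
  qed
  finally show ?thesis .
qed

lemma renew: "0 \<le> r \<Longrightarrow> integrable lborel (\<lambda>a. kt a * phi (r - a)) \<and> phi r = (LINT a|lborel. kt a * phi (r - a))"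
proof -
  assume r: "0 \<le> r"
  define g where "g a = indicator {0..A} a * (k a * x a r) / (xs 0 * E r)" for a
  have gi: "integrable lborel g"
    unfolding g_def using L2_prod_int[OF Linf_L2[OF k_Linf] xL2[OF r]] by simp
  have eq: "g a = kt a * phi (r - a)" if "a \<notin> {A}" for a
  proof (cases "a \<in> {0..A}")
    case True
    then have a: "0 \<le> a" "a < A" using that by auto
    have "kt a * phi (r - a) = k a * xs a / xs 0 * (x a r / (xs a * E r))"
      unfolding kt_def using True kt_eq[OF a] v_phi[OF a r] by (simp add: v_def)
    also have "\<dots> = k a * x a r / (xs 0 * E r)" using xs_pos[OF a] by (simp add: field_simps)
    finally show ?thesis unfolding g_def using True by simp
  next
    case False then show ?thesis unfolding g_def kt_def by simp
  qed
  have "phi r = x 0 r / (xs 0 * E r)" unfolding phi_def v_def using r by simp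
  also have "\<dots> = (LINT a|lborel. g a)"
    unfolding g_def bdry[OF r] set_lebesgue_integral_def by simp
  also have "\<dots> = (LINT a|lborel. kt a * phi (r - a))"
    by (rule integral_eq_except[of "{A}"]) (use eq in auto)
  finally show ?thesis using integrable_eq_except[of "{A}" g, OF _ _ gi] eq by auto
qed

lemma renewE: "0 \<le> r \<Longrightarrow> ennreal (phi r) = (\<integral>\<^sup>+ s. ennreal (kt s) * ennreal (phi (r - s)) \<partial>lborel)"
proof -
  assume r: "0 \<le> r"
  have "(\<integral>\<^sup>+ s. ennreal (kt s * phi (r - s)) \<partial>lborel) = ennreal (LINT a|lborel. kt a * phi (r - a))"
    by (rule nn_integral_eq_integral) (use renew[OF r] kt_nonneg' phi_nonneg in auto)
  then show ?thesis using renew[OF r] kt_nonneg' phi_nonneg by (simp add: ennreal_mult)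
qed

lemma Phi_add: "al \<le> be \<Longrightarrow> be \<le> ga \<Longrightarrow> Phi al ga = Phi al be + Phi be ga"
proof -
  assume ab: "al \<le> be" and bg: "be \<le> ga"
  have "Phi al be + Phi be ga = (\<integral>\<^sup>+ r. indicator {al..be} r * ennreal (phi r) + indicator {be..ga} r * ennreal (phi r) \<partial>lborel)"
    unfolding Phi_def by (rule nn_integral_add[symmetric]) measurable
  also have "\<dots> = Phi al ga"
    unfolding Phi_def
    by (rule nn_integral_cong_AE) (use AE_lborel_singleton[of be] ab bg in \<open>auto simp: indicator_def elim!: eventually_mono\<close>)
  finally show ?thesis by simp
qed

end


context sp begin

lemma Phi_meas[measurable]: "(\<lambda>s. Phi (f s) (g s)) \<in> borel_measurable borel"
  if [measurable]: "f \<in> borel_measurable borel" "g \<in> borel_measurable borel" for f g :: "real \<Rightarrow> real"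
proof -
  have "(\<lambda>s. \<integral>\<^sup>+ r. of_bool (f s \<le> r \<and> r \<le> g s) * ennreal (phi r) \<partial>lborel) \<in> borel_measurable borel"
    by measurable
  then show ?thesis unfolding Phi_def by (simp add: indicator_def of_bool_def)
qed

lemma kt_one_enn: "(\<integral>\<^sup>+ s. ennreal (kt s) \<partial>lborel) = 1"
proof -
  have "(\<integral>\<^sup>+ s. ennreal (kt s) \<partial>lborel) = ennreal (LINT s|lborel. kt s)"
    by (rule nn_integral_eq_integral[OF kt_integrable]) (use kt_nonneg' in auto)
  also have "(LINT s|lborel. kt s) = 1" using kt_one unfolding kt_def set_lebesgue_integral_def by simp
  finally show ?thesis by simp
qed

lemma Phi_renew: "0 \<le> tau \<Longrightarrow> Phi tau T = (\<integral>\<^sup>+ s. ennreal (kt s) * Phi (tau - s) (T - s) \<partial>lborel)"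
proof -
  assume tau: "0 \<le> tau"
  have "Phi tau T = (\<integral>\<^sup>+ r. \<integral>\<^sup>+ s. indicator {tau..T} r * (ennreal (kt s) * ennreal (phi (r - s))) \<partial>lborel \<partial>lborel)"
    unfolding Phi_def
  proof (rule nn_integral_cong)
    fix r :: real
    show "indicator {tau..T} r * ennreal (phi r) = (\<integral>\<^sup>+ s. indicator {tau..T} r * (ennreal (kt s) * ennreal (phi (r - s))) \<partial>lborel)"
    proof (cases "r \<in> {tau..T}")
      case True
      then have "0 \<le> r" using tau by auto
      then show ?thesis using True renewE[of r] by (simp add: nn_integral_cmult)
    qed simp
  qed
  also have "\<dots> = (\<integral>\<^sup>+ s. \<integral>\<^sup>+ r. indicator {tau..T} r * (ennreal (kt s) * ennreal (phi (r - s))) \<partial>lborel \<partial>lborel)"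
    by (rule lborel_pair.Fubini') measurable
  also have "\<dots> = (\<integral>\<^sup>+ s. ennreal (kt s) * Phi (tau - s) (T - s) \<partial>lborel)"
  proof (rule nn_integral_cong)
    fix s :: real
    have "(\<integral>\<^sup>+ r. indicator {tau..T} r * (ennreal (kt s) * ennreal (phi (r - s))) \<partial>lborel)
       = (\<integral>\<^sup>+ r. ennreal (kt s) * (indicator {tau..T} r * ennreal (phi (r - s))) \<partial>lborel)"
      by (simp add: ac_simps)
    also have "\<dots> = ennreal (kt s) * (\<integral>\<^sup>+ r. indicator {tau..T} r * ennreal (phi (r - s)) \<partial>lborel)"
      by (rule nn_integral_cmult) measurable
    finally show "(\<integral>\<^sup>+ r. indicator {tau..T} r * (ennreal (kt s) * ennreal (phi (r - s))) \<partial>lborel) = ennreal (kt s) * Phi (tau - s) (T - s)"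
      using subst2 by simp
  qed
  finally show ?thesis .
qed

lemma L_step: "0 \<le> tau \<Longrightarrow> tau \<le> T \<Longrightarrow> L T + Phi tau T = L tau + Phi tau T"
proof -
  assume tau: "0 \<le> tau" and tT: "tau \<le> T"
  have "L T + Phi tau T = (\<integral>\<^sup>+ s. ennreal (kt s) * Phi (T - s) T + ennreal (kt s) * Phi (tau - s) (T - s) \<partial>lborel)"
    unfolding L_eq1[of T] Phi_renew[OF tau, of T] by (rule nn_integral_add[symmetric]) measurable
  also have "\<dots> = (\<integral>\<^sup>+ s. ennreal (kt s) * Phi (tau - s) tau + ennreal (kt s) * Phi tau T \<partial>lborel)"
  proof (rule nn_integral_cong)
    fix s :: real
    show "ennreal (kt s) * Phi (T - s) T + ennreal (kt s) * Phi (tau - s) (T - s) =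
          ennreal (kt s) * Phi (tau - s) tau + ennreal (kt s) * Phi tau T"
    proof (cases "s \<in> {0..A}")
      case True
      then have s: "0 \<le> s" by auto
      have "Phi (T - s) T + Phi (tau - s) (T - s) = Phi (tau - s) T"
        using Phi_add[of "tau - s" "T - s" T] s tT by (simp add: add.commute)
      also have "\<dots> = Phi (tau - s) tau + Phi tau T"
        using Phi_add[of "tau - s" tau T] s tT by simp
      finally show ?thesis by (simp add: distrib_left[symmetric])
    next
      case False then show ?thesis using kt_zero[OF False] by simp
    qed
  qed
  also have "\<dots> = (\<integral>\<^sup>+ s. ennreal (kt s) * Phi (tau - s) tau \<partial>lborel) + (\<integral>\<^sup>+ s. ennreal (kt s) * Phi tau T \<partial>lborel)"
    by (rule nn_integral_add) measurable
  also have "(\<integral>\<^sup>+ s. ennreal (kt s) * Phi tau T \<partial>lborel) = Phi tau T"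
    using nn_integral_multc[of "\<lambda>s. ennreal (kt s)" lborel "Phi tau T"] kt_one_enn by simp
  finally show ?thesis using L_eq1[of tau] by simp
qed

end


context sp begin

lemma xs_lb: "0 \<le> a \<Longrightarrow> a \<le> d \<Longrightarrow> d < A \<Longrightarrow> xs a \<ge> xs 0 * exp (- (M d + \<bar>z\<bar> * A))"
proof -
  assume a: "0 \<le> a" "a \<le> d" "d < A"
  have "M a \<le> M d" using M_mono a by auto
  moreover have "z * a \<le> \<bar>z\<bar> * A"
  proof -
    have "\<bar>z * a\<bar> \<le> \<bar>z\<bar> * A" using a by (simp add: abs_mult mult_left_mono)
    then show ?thesis by linarith
  qed
  ultimately have "- (M d + \<bar>z\<bar> * A) \<le> - (M a + z * a)" by linarith
  then have "exp (- (M d + \<bar>z\<bar> * A)) \<le> exp (- (M a + z * a))" by simp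
  then show ?thesis using xs_eq[of a] a xs0_pos by simp
qed

lemma Phi_fin: "0 \<le> tau \<Longrightarrow> tau \<le> T \<Longrightarrow> T < tau + A \<Longrightarrow> Phi tau T < \<infinity>"
proof -
  assume tau: "0 \<le> tau" and tT: "tau \<le> T" and TA: "T < tau + A"
  define d where "d = T - tau"
  have d: "0 \<le> d" "d < A" using tT TA unfolding d_def by auto
  define m where "m = xs 0 * exp (- (M d + \<bar>z\<bar> * A))"
  have m0: "m > 0" unfolding m_def using xs0_pos by simp
  define c where "c = 1 / (m * E T)"
  have c0: "c \<ge> 0" unfolding c_def using m0 E_pos[of T] by simp
  define h where "h a = indicator {0..A} a * x a T" for a
  have T0: "0 \<le> T" using tau tT by simp
  have hi: "integrable lborel h" unfolding h_def using L2_int[OF xL2[OF T0]] by simp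
  have hm[measurable]: "h \<in> borel_measurable borel" using borel_measurable_integrable[OF hi] by simp
  have bnd: "indicator {tau..T} r * ennreal (phi r) \<le> ennreal (c * \<bar>h (T - r)\<bar>)" for r
  proof (cases "r \<in> {tau..T}")
    case True
    define a where "a = T - r"
    have a: "0 \<le> a" "a \<le> d" "a < A" using True d unfolding a_def d_def by auto
    have "phi r = v a T" using v_phi[of a T] a T0 unfolding a_def by simp
    also have "\<dots> = x a T / (xs a * E T)" unfolding v_def ..
    also have "\<dots> \<le> x a T / (m * E T)"
    proof -
      have "m \<le> xs a" unfolding m_def using xs_lb[OF a(1,2) d(2)] .
      then have "m * E T \<le> xs a * E T" using E_pos[of T] by simp
      moreover have "0 < x a T" using pos a T0 by simp
      ultimately show ?thesis using m0 E_pos[of T] by (intro divide_left_mono) auto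
    qed
    also have "\<dots> = c * \<bar>h a\<bar>"
    proof -
      have "0 < x a T" using pos a T0 by simp
      then show ?thesis unfolding c_def h_def using a by (simp add: indicator_def)
    qed
    finally show ?thesis using True unfolding a_def by (simp add: ennreal_leI)
  qed simp
  have "Phi tau T \<le> (\<integral>\<^sup>+ r. ennreal (c * \<bar>h (T - r)\<bar>) \<partial>lborel)"
    unfolding Phi_def by (rule nn_integral_mono) (rule bnd)
  also have "(\<integral>\<^sup>+ r. ennreal (c * \<bar>h (T - r)\<bar>) \<partial>lborel) = (\<integral>\<^sup>+ a. ennreal (c * \<bar>h a\<bar>) \<partial>lborel)"
    using nn_integral_real_affine[of "\<lambda>a. ennreal (c * \<bar>h a\<bar>)" "-1" T] by simp
  also have "\<dots> = (\<integral>\<^sup>+ a. ennreal (norm (c * h a)) \<partial>lborel)"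
    using c0 by (simp add: abs_mult)
  also have "\<dots> < \<infinity>"
    using integrable_mult_right[OF hi, of c] unfolding integrable_iff_bounded by (simp only: real_norm_def)
  finally show ?thesis .
qed

lemma L_loc: "0 \<le> tau \<Longrightarrow> tau \<le> T \<Longrightarrow> T < tau + A \<Longrightarrow> L T = L tau"
proof -
  assume a: "0 \<le> tau" "tau \<le> T" "T < tau + A"
  have "Phi tau T + L T = Phi tau T + L tau" using L_step[OF a(1,2)] by (simp add: add.commute)
  then have "Phi tau T = \<infinity> \<or> L T = L tau" by (simp add: ennreal_add_left_cancel)
  then show ?thesis using Phi_fin[OF a] by auto
qed

lemma L_const: "0 \<le> T \<Longrightarrow> L T = L 0"
proof -
  have ind: "\<forall>T. 0 \<le> T \<and> T \<le> real n * (A / 2) \<longrightarrow> L T = L 0" for n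
  proof (induction n)
    case 0
    show ?case
    proof (intro allI impI)
      fix T :: real assume "0 \<le> T \<and> T \<le> real 0 * (A / 2)"
      then have "T = 0" by simp
      then show "L T = L 0" by simp
    qed
  next
    case (Suc n)
    show ?case
    proof (intro allI impI)
      fix T assume T: "0 \<le> T \<and> T \<le> real (Suc n) * (A / 2)"
      show "L T = L 0"
      proof (cases "T \<le> real n * (A / 2)")
        case True then show ?thesis using Suc.IH T by blast
      next
        case False
        define tau where "tau = real n * (A / 2)"
        have "0 \<le> tau" unfolding tau_def using A_pos by simp
        moreover have "tau \<le> T" using False unfolding tau_def by simp
        moreover have "T < tau + A"
        proof -
          have "real (Suc n) * (A / 2) = real n * (A / 2) + A / 2" by (simp add: algebra_simps)
          then show ?thesis using T A_pos unfolding tau_def by linarith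
        qed
        ultimately have "L T = L tau" by (rule L_loc)
        also have "L tau = L 0"
        proof -
          have "tau \<le> real n * (A / 2)" unfolding tau_def by simp
          then show ?thesis using Suc.IH \<open>0 \<le> tau\<close> by blast
        qed
        finally show ?thesis .
      qed
    qed
  qed
  assume T: "0 \<le> T"
  obtain n :: nat where n: "T / (A / 2) < real n" using reals_Archimedean2 by blast
  then have "T \<le> real n * (A / 2)" using A_pos by (simp add: field_simps)
  then show ?thesis using ind[of n] T by blast
qed

end


context sp begin

lemma xs_ub: "0 \<le> a \<Longrightarrow> a \<le> s \<Longrightarrow> s < A \<Longrightarrow> xs s \<le> xs a * exp (\<bar>z\<bar> * A)"
proof -
  assume a: "0 \<le> a" "a \<le> s" "s < A"
  have "M a \<le> M s" using M_mono a by auto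
  moreover have "z * a - z * s \<le> \<bar>z\<bar> * A"
  proof -
    have "\<bar>z * (a - s)\<bar> \<le> \<bar>z\<bar> * A" using a by (simp add: abs_mult mult_left_mono)
    then show ?thesis by (simp add: algebra_simps)
  qed
  ultimately have "- (M s + z * s) \<le> - (M a + z * a) + \<bar>z\<bar> * A" by linarith
  then have "exp (- (M s + z * s)) \<le> exp (- (M a + z * a) + \<bar>z\<bar> * A)" by simp
  also have "\<dots> = exp (- (M a + z * a)) * exp (\<bar>z\<bar> * A)" by (simp add: mult_exp_exp)
  finally show ?thesis using xs_eq[of a] xs_eq[of s] a xs0_pos by simp
qed

lemma kt_bound_ex: "\<exists>K>0. \<forall>a. 0 \<le> a \<and> a < A \<longrightarrow> (AE s in lborel. indicator {a..A} s * kt s \<le> indicator {a..A} s * (K * xs a))"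
proof -
  obtain C0 where C0: "AE s in lborel. s \<in> {0..A} \<longrightarrow> \<bar>k s\<bar> \<le> C0"
    using k_Linf unfolding Linfon_def by auto
  define C where "C = max C0 1"
  define K where "K = C * exp (\<bar>z\<bar> * A) / xs 0"
  have K0: "K > 0" unfolding K_def C_def using xs0_pos by simp
  have "\<forall>a. 0 \<le> a \<and> a < A \<longrightarrow> (AE s in lborel. indicator {a..A} s * kt s \<le> indicator {a..A} s * (K * xs a))"
  proof (intro allI impI)
    fix a assume a: "0 \<le> a \<and> a < A"
    show "AE s in lborel. indicator {a..A} s * kt s \<le> indicator {a..A} s * (K * xs a)"
      using C0 AE_lborel_singleton[of A]
    proof (eventually_elim)
      case (elim s)
      show ?case
      proof (cases "s \<in> {a..A}")
        case True
        then have s: "0 \<le> s" "s < A" "a \<le> s" using elim a by auto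
        have ks: "k s \<le> C" using elim s unfolding C_def by auto
        have k0: "k s \<ge> 0" using k_nonneg s by auto
        have "kt s = k s * xs s / xs 0" unfolding kt_def using kt_eq[of s] s by simp
        also have "\<dots> \<le> C * (xs a * exp (\<bar>z\<bar> * A)) / xs 0"
          using ks k0 xs_ub[of a s] s a xs_pos[of s] xs0_pos
          by (intro divide_right_mono mult_mono) auto
        also have "\<dots> = K * xs a" unfolding K_def by simp
        finally show ?thesis using True by simp
      qed simp
    qed
  qed
  then show ?thesis using K0 by blast
qed

definition "Kc = (SOME K. K > 0 \<and> (\<forall>a. 0 \<le> a \<and> a < A \<longrightarrow> (AE s in lborel. indicator {a..A} s * kt s \<le> indicator {a..A} s * (K * xs a))))"

lemma Kc: "Kc > 0" "0 \<le> a \<Longrightarrow> a < A \<Longrightarrow> AE s in lborel. indicator {a..A} s * kt s \<le> indicator {a..A} s * (Kc * xs a)"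
  using someI_ex[OF kt_bound_ex] unfolding Kc_def by auto

lemma ind_const_int: "integrable lborel (\<lambda>s. indicator {a..b::real} s * (c::real))"
  using set_integrable_const_ivl[of a b c] unfolding set_integrable_def by simp

lemma ind_const_integral: "a \<le> b \<Longrightarrow> (LINT s|lborel. indicator {a..b::real} s * (c::real)) = c * (b - a)"
  using set_int_const_ivl[of a b c] unfolding set_lebesgue_integral_def by simp

lemma Qr_upper: "0 \<le> a \<Longrightarrow> a < A \<Longrightarrow> Qr a \<le> Kc * xs a * A"
proof -
  assume a: "0 \<le> a" "a < A"
  have "Qr a = (LINT s|lborel. indicator {a..A} s * kt s)" using Qr_int a by simp
  also have "\<dots> \<le> (LINT s|lborel. indicator {a..A} s * (Kc * xs a))"
    by (rule integral_mono_AE[OF Qr_integrable ind_const_int Kc(2)[OF a]])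
  also have "\<dots> = Kc * xs a * (A - a)" using a by (simp add: ind_const_integral)
  also have "\<dots> \<le> Kc * xs a * A" using a Kc(1) xs_pos[OF a] by simp
  finally show ?thesis .
qed

lemma Qr_lower: "0 \<le> a \<Longrightarrow> a < A \<Longrightarrow> Qr a \<ge> 1 - Kc * xs 0 * a"
proof -
  assume a: "0 \<le> a" "a < A"
  have "1 = (LINT s:{0..a}|lborel. ktilde mu z k s) + Qr a"
    unfolding Qr_def using kt_one set_int_split[OF kt_int, of a] a by simp
  moreover have "(LINT s:{0..a}|lborel. ktilde mu z k s) = (LINT s|lborel. indicator {0..a} s * kt s)"
    unfolding set_lebesgue_integral_def kt_def using a
    by (intro arg_cong[where f="integral\<^sup>L lborel"]) (auto simp: indicator_def fun_eq_iff)
  moreover have "(LINT s|lborel. indicator {0..a} s * kt s) \<le> (LINT s|lborel. indicator {0..a} s * (Kc * xs 0))"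
  proof (rule integral_mono_AE[OF _ ind_const_int])
    show "integrable lborel (\<lambda>s. indicator {0..a} s * kt s)" using Qr_integrable[of 0] integrable_mult_indicator[OF _ kt_integrable, of "{0..a}"] by simp
    show "AE s in lborel. indicator {0..a} s * kt s \<le> indicator {0..a} s * (Kc * xs 0)"
      using Kc(2)[OF order_refl A_pos]
    proof (eventually_elim)
      case (elim s)
      then show ?case using a by (cases "s \<in> {0..a}") (auto simp: indicator_def)
    qed
  qed
  moreover have "(LINT s|lborel. indicator {0..a} s * (Kc * xs 0)) = Kc * xs 0 * a" using a by (simp add: ind_const_integral)
  ultimately show ?thesis by linarith
qed

end


context sp begin

definition "Qp a = (LINT s|lborel. indicator {a..A} s * kt s)"

lemma Qp_meas[measurable]: "Qp \<in> borel_measurable borel"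
proof -
  have "(\<lambda>a. LINT s|lborel. indicator {a..A} s * kt s) \<in> borel_measurable lborel"
  proof (rule lborel.borel_measurable_lebesgue_integral)
    have "(\<lambda>p::real\<times>real. of_bool (fst p \<le> snd p \<and> snd p \<le> A) * kt (snd p)) \<in> borel_measurable (lborel \<Otimes>\<^sub>M lborel)"
      by measurable
    then show "(\<lambda>(a, s). indicator {a..A} s * kt s) \<in> borel_measurable (lborel \<Otimes>\<^sub>M lborel)"
      by (simp add: indicator_def case_prod_beta)
  qed
  then show ?thesis unfolding Qp_def[abs_def] by simp
qed

lemma Qp_nonneg: "Qp a \<ge> 0"
  unfolding Qp_def using kt_nonneg' by (auto intro!: integral_nonneg_AE)

lemma L_alt: "L T = (\<integral>\<^sup>+ a. ennreal (indicator {0..A} a * (Qp a * phi (T - a))) \<partial>lborel)"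
  unfolding L_def
proof (rule nn_integral_cong)
  fix a :: real
  show "indicator {0..A} a * ennreal (Qr a) * ennreal (phi (T - a)) = ennreal (indicator {0..A} a * (Qp a * phi (T - a)))"
  proof (cases "a \<in> {0..A}")
    case True
    then have "Qr a = Qp a" using Qr_int unfolding Qp_def by auto
    then show ?thesis using True Qp_nonneg[of a] phi_nonneg by (simp add: ennreal_mult)
  qed simp
qed

lemma L_meas_int[measurable]: "(\<lambda>a. indicator {0..A} a * (Qp a * phi (T - a))) \<in> borel_measurable borel"
  by measurable

lemma J_eq: "(LINT a:{0..A}|lborel. Qr a * phi (T - a)) = enn2real (L T)"
proof -
  have "(LINT a:{0..A}|lborel. Qr a * phi (T - a)) = (LINT a|lborel. indicator {0..A} a * (Qp a * phi (T - a)))"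
    unfolding set_lebesgue_integral_def
    by (intro arg_cong[where f="integral\<^sup>L lborel"]) (auto simp: fun_eq_iff indicator_def Qp_def Qr_int)
  also have "\<dots> = enn2real (\<integral>\<^sup>+ a. ennreal (indicator {0..A} a * (Qp a * phi (T - a))) \<partial>lborel)"
    by (rule integral_eq_nn_integral) (use Qp_nonneg phi_nonneg in auto)
  finally show ?thesis using L_alt by simp
qed

lemma L0_fin: "L 0 < \<infinity>"
proof -
  define c where "c = Kc * A"
  have c0: "c \<ge> 0" unfolding c_def using Kc(1) A_pos by simp
  have hi: "integrable lborel h0" unfolding h0_def using L2_int[OF xL2[of 0]] by simp
  have bnd: "ennreal (indicator {0..A} a * (Qp a * phi (0 - a))) \<le> ennreal (norm (c * h0 a))" for a
  proof (cases "0 \<le> a \<and> a < A")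
    case True
    then have a: "0 \<le> a" "a < A" by auto
    have "phi (0 - a) = v a 0" using v_phi[OF a, of 0] by simp
    also have "\<dots> = x a 0 / xs a" unfolding v_def by (simp add: E0)
    finally have ph: "phi (0 - a) = x a 0 / xs a" .
    have Q: "Qp a = Qr a" using Qr_int a unfolding Qp_def by simp
    have x0: "x a 0 > 0" using pos a by simp
    have "Qp a * phi (0 - a) \<le> (Kc * xs a * A) * (x a 0 / xs a)"
      unfolding Q ph using Qr_upper[OF a] x0 xs_pos[OF a] by (intro mult_right_mono) auto
    also have "\<dots> = c * x a 0" unfolding c_def using xs_pos[OF a] by simp
    finally have "Qp a * phi (0 - a) \<le> c * x a 0" .
    moreover have "norm (c * h0 a) = c * x a 0" unfolding h0_def using a x0 c0 by (simp add: abs_mult)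
    ultimately have "indicator {0..A} a * (Qp a * phi (0 - a)) \<le> norm (c * h0 a)" using a by (simp add: indicator_def)
    then show ?thesis by (rule ennreal_leI)
  next
    case False
    then have "indicator {0..A} a * (Qp a * phi (0 - a)) = 0"
    proof (cases "a = A")
      case True
      then have "phi (0 - a) = 0" unfolding phi_def using A_pos by simp
      then show ?thesis by simp
    next
      case False2: False
      then show ?thesis using False by (auto simp: indicator_def)
    qed
    then show ?thesis by (metis ennreal_0 zero_le)
  qed
  have "L 0 \<le> (\<integral>\<^sup>+ a. ennreal (norm (c * h0 a)) \<partial>lborel)"
    unfolding L_alt by (rule nn_integral_mono) (rule bnd)
  also have "\<dots> < \<infinity>" using integrable_mult_right[OF hi, of c] unfolding integrable_iff_bounded by simp
  finally show ?thesis .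
qed

lemma L0_pos: "L 0 > 0"
proof (rule ccontr)
  assume "\<not> L 0 > 0"
  then have "L 0 = 0" by simp
  then have "AE a in lborel. ennreal (indicator {0..A} a * (Qp a * phi (0 - a))) = 0"
    unfolding L_alt by (subst (asm) nn_integral_0_iff_AE) measurable
  moreover define d where "d = min (A / 2) (1 / (2 * Kc * xs 0))"
  have d0: "d > 0" unfolding d_def using A_pos Kc(1) xs0_pos by simp
  have "\<And>a. a \<in> {0<..<d} \<Longrightarrow> ennreal (indicator {0..A} a * (Qp a * phi (0 - a))) \<noteq> 0"
  proof -
    fix a assume "a \<in> {0<..<d}"
    then have a: "0 < a" "a < d" by auto
    have aA: "a < A" using a unfolding d_def using A_pos by linarith
    have "Kc * xs 0 * a \<le> Kc * xs 0 * (1 / (2 * Kc * xs 0))"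
      using a Kc(1) xs0_pos unfolding d_def by (intro mult_left_mono) auto
    also have "\<dots> = 1 / 2" using Kc(1) xs0_pos by simp
    finally have "Qr a \<ge> 1 / 2" using Qr_lower[of a] a aA by linarith
    moreover have "Qp a = Qr a" using Qr_int a unfolding Qp_def by simp
    moreover have "phi (0 - a) > 0" using phi_pos[of "0 - a"] aA by simp
    ultimately have "indicator {0..A} a * (Qp a * phi (0 - a)) > 0" using a aA by (simp add: indicator_def)
    then show "ennreal (indicator {0..A} a * (Qp a * phi (0 - a))) \<noteq> 0" by (metis ennreal_eq_0_iff not_le)
  qed
  ultimately have "AE a in lborel. a \<notin> {0<..<d}" by (auto elim: eventually_mono)
  then have "emeasure lborel {0<..<d} = 0"
    by (subst (asm) AE_iff_measurable[of "{0<..<d}"]) auto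
  then show False using d0 by simp
qed

end


context sp begin

lemma pi0_xs: "0 \<le> a \<Longrightarrow> a < A \<Longrightarrow> pi0 A mu z k a * xs a = xs 0 * Qr a"
proof -
  assume a: "0 \<le> a" "a < A"
  have eq: "indicator {a..A} s * (k s * exp (- (LINT l:{a..s}|lborel. z + mu l))) * xs a
      = xs 0 * (indicator {a..A} s * ktilde mu z k s)" if "s \<notin> {A}" for s
  proof (cases "s \<in> {a..A}")
    case True
    then have s: "a \<le> s" "s < A" using that by auto
    have s0: "0 \<le> s" using s a by simp
    have I: "(LINT l:{a..s}|lborel. z + mu l) = z * (s - a) + (LINT l:{a..s}|lborel. mu l)"
      using P_eq[OF a(1) s] .
    have Ms: "M s = M a + (LINT l:{a..s}|lborel. mu l)" using M_split[OF a(1) s] .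
    have kt: "ktilde mu z k s = k s * exp (- (M s + z * s))"
      unfolding ktilde_def using G_eq[OF s0 s(2)] by simp
    have "exp (- (z * (s - a) + (LINT l:{a..s}|lborel. mu l))) * exp (- (M a + z * a)) = exp (- (M s + z * s))"
      unfolding Ms by (simp add: mult_exp_exp algebra_simps)
    then show ?thesis using True unfolding I kt xs_eq[OF a] by (simp add: algebra_simps)
  next
    case False then show ?thesis by simp
  qed
  have "pi0 A mu z k a * xs a = (LINT s|lborel. indicator {a..A} s * (k s * exp (- (LINT l:{a..s}|lborel. z + mu l))) * xs a)"
    unfolding pi0_def set_lebesgue_integral_def by simp
  also have "\<dots> = (LINT s|lborel. xs 0 * (indicator {a..A} s * ktilde mu z k s))"
    by (rule integral_eq_except[of "{A}"]) (use eq in auto)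
  also have "\<dots> = xs 0 * Qr a" unfolding Qr_def set_lebesgue_integral_def by simp
  finally show ?thesis .
qed

lemma Pnum_eq: "0 \<le> T \<Longrightarrow> (LINT a:{0..A}|lborel. pi0 A mu z k a * x a T) = xs 0 * E T * enn2real (L 0)"
proof -
  assume T: "0 \<le> T"
  have eq: "indicator {0..A} a * (pi0 A mu z k a * x a T) = (xs 0 * E T) * (indicator {0..A} a * (Qr a * phi (T - a)))"
    if "a \<notin> {A}" for a
  proof (cases "a \<in> {0..A}")
    case True
    then have a: "0 \<le> a" "a < A" using that by auto
    have "x a T = xs a * E T * v a T" unfolding v_def using xs_pos[OF a] E_pos[of T] by simp
    then have "pi0 A mu z k a * x a T = (pi0 A mu z k a * xs a) * E T * v a T" by simp
    also have "\<dots> = xs 0 * Qr a * E T * phi (T - a)" using pi0_xs[OF a] v_phi[OF a T] by simp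
    finally show ?thesis using True by simp
  next
    case False then show ?thesis by simp
  qed
  have "(LINT a:{0..A}|lborel. pi0 A mu z k a * x a T) = (LINT a|lborel. (xs 0 * E T) * (indicator {0..A} a * (Qr a * phi (T - a))))"
    unfolding set_lebesgue_integral_def by (simp only: real_scaleR_def) (rule integral_eq_except[of "{A}"], use eq in auto)
  also have "\<dots> = (xs 0 * E T) * (LINT a:{0..A}|lborel. Qr a * phi (T - a))"
    unfolding set_lebesgue_integral_def by simp
  also have "\<dots> = xs 0 * E T * enn2real (L 0)" using J_eq[of T] L_const[OF T] by simp
  finally show ?thesis .
qed

lemma Qp_le1: "Qp a \<le> 1"
proof -
  have "Qp a \<le> (LINT s|lborel. kt s)"
    unfolding Qp_def by (rule integral_mono[OF Qr_integrable kt_integrable]) (use kt_nonneg' in \<open>auto simp: indicator_def\<close>)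
  also have "(LINT s|lborel. kt s) = 1" using kt_one unfolding kt_def set_lebesgue_integral_def by simp
  finally show ?thesis .
qed

lemma QI_pos: "(LINT a:{0..A}|lborel. Qr a) > 0"
proof -
  have eq: "(LINT a:{0..A}|lborel. Qr a) = (LINT a|lborel. indicator {0..A} a * Qp a)"
    unfolding set_lebesgue_integral_def
    by (intro arg_cong[where f="integral\<^sup>L lborel"]) (auto simp: fun_eq_iff indicator_def Qp_def Qr_int)
  have int: "integrable lborel (\<lambda>a. indicator {0..A} a * Qp a)"
  proof (rule Bochner_Integration.integrable_bound[OF ind_int[of A 1]])
    show "(\<lambda>a. indicator {0..A} a * Qp a) \<in> borel_measurable lborel" by measurable
    show "AE a in lborel. norm (indicator {0..A} a * Qp a) \<le> norm (indicator {0..A} a * (1::real))"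
      using Qp_le1 Qp_nonneg by (auto simp: indicator_def)
  qed
  define d where "d = min (A / 2) (1 / (2 * Kc * xs 0))"
  have d0: "d > 0" unfolding d_def using A_pos Kc(1) xs0_pos by simp
  have "(LINT a|lborel. indicator {0..d} a * (1 / 2 :: real)) \<le> (LINT a|lborel. indicator {0..A} a * Qp a)"
  proof (rule integral_mono[OF ind_const_int int])
    fix a :: real
    show "indicator {0..d} a * (1 / 2) \<le> indicator {0..A} a * Qp a"
    proof (cases "a \<in> {0..d}")
      case True
      then have a: "0 \<le> a" "a \<le> d" by auto
      have aA: "a < A" using a unfolding d_def using A_pos by linarith
      have "Kc * xs 0 * a \<le> Kc * xs 0 * (1 / (2 * Kc * xs 0))"
        using a Kc(1) xs0_pos unfolding d_def by (intro mult_left_mono) auto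
      also have "\<dots> = 1 / 2" using Kc(1) xs0_pos by simp
      finally have "Qr a \<ge> 1 / 2" using Qr_lower[of a] a aA by linarith
      moreover have "Qp a = Qr a" using Qr_int a unfolding Qp_def by simp
      ultimately show ?thesis using a aA True by (simp add: indicator_def)
    next
      case False
      then have "indicator {0..d} a * (1 / 2 :: real) = 0" by simp
      moreover have "0 \<le> indicator {0..A} a * Qp a" using Qp_nonneg[of a] by simp
      ultimately show ?thesis by linarith
    qed
  qed
  moreover have "(LINT a|lborel. indicator {0..d} a * (1 / 2 :: real)) = d / 2"
    using ind_const_integral[of 0 d "1/2"] d0 by simp
  ultimately show ?thesis using eq d0 by simp
qed

definition "Pi0 = PiF A mu z k xs (\<lambda>b. x b 0)"

lemma D_eq: "(LINT a:{0..A}|lborel. pi0 A mu z k a * xs a) = xs 0 * (LINT a:{0..A}|lborel. Qr a)"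
proof -
  have "(LINT a:{0..A}|lborel. pi0 A mu z k a * xs a) = (LINT a|lborel. xs 0 * (indicator {0..A} a * Qr a))"
    unfolding set_lebesgue_integral_def
    by (simp only: real_scaleR_def) (rule integral_eq_except[of "{A}"], auto simp: pi0_xs indicator_def)
  then show ?thesis unfolding set_lebesgue_integral_def by simp
qed

lemma PiF_t: "0 \<le> T \<Longrightarrow> PiF A mu z k xs (\<lambda>b. x b T) = E T * Pi0"
  unfolding Pi0_def PiF_def using Pnum_eq[of T] Pnum_eq[of 0] E0 by simp

lemma Pi0_pos: "Pi0 > 0"
proof -
  have "enn2real (L 0) > 0" using L0_pos L0_fin by (simp add: enn2real_positive_iff)
  then show ?thesis unfolding Pi0_def PiF_def using Pnum_eq[of 0] E0 D_eq QI_pos xs0_pos by simp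
qed

end


context sp begin

lemma species_main:
  "\<exists>psi :: real \<Rightarrow> real.
    (\<forall>a t. 0 \<le> a \<and> a < A \<and> 0 \<le> t \<longrightarrow> psi (t - a) = x a t / (xs a * PiF A mu z k xs (\<lambda>b. x b t)) - 1)
   \<and> (\<forall>t\<ge>0. (eta A mu z k xs x has_real_derivative (z - W t)) (at t within {0..}))
   \<and> (\<forall>t\<ge>0. psi t = (LINT a:{0..A}|lborel. ktilde mu z k a * psi (t - a)))
   \<and> eta A mu z k xs x 0 = ln (PiF A mu z k xs x0)
   \<and> (\<forall>a. 0 < a \<and> a < A \<longrightarrow> psi (- a) = x0 a / (xs a * PiF A mu z k xs x0) - 1)
   \<and> (\<forall>a t. 0 \<le> a \<and> a < A \<and> 0 \<le> t \<longrightarrow> x a t = xs a * (1 + psi (t - a)) * exp (eta A mu z k xs x t))"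
proof -
  define psi where "psi r = phi r / Pi0 - 1" for r
  have P0: "Pi0 > 0" by (rule Pi0_pos)
  have eta_t: "eta A mu z k xs x t = z * t - WI t + ln Pi0" if t: "0 \<le> t" for t
  proof -
    have "eta A mu z k xs x t = ln (E t * Pi0)" unfolding eta_def using PiF_t[OF t] by simp
    also have "\<dots> = ln (E t) + ln Pi0" using E_pos[of t] P0 by (simp add: ln_mult)
    also have "ln (E t) = z * t - WI t" unfolding E_def by simp
    finally show ?thesis .
  qed
  have c1: "\<forall>a t. 0 \<le> a \<and> a < A \<and> 0 \<le> t \<longrightarrow> psi (t - a) = x a t / (xs a * PiF A mu z k xs (\<lambda>b. x b t)) - 1"
  proof (intro allI impI)
    fix a t :: real assume h: "0 \<le> a \<and> a < A \<and> 0 \<le> t"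
    have "psi (t - a) = v a t / Pi0 - 1" unfolding psi_def using v_phi h by simp
    also have "\<dots> = x a t / (xs a * PiF A mu z k xs (\<lambda>b. x b t)) - 1"
      unfolding v_def using PiF_t h by (simp add: field_simps)
    finally show "psi (t - a) = x a t / (xs a * PiF A mu z k xs (\<lambda>b. x b t)) - 1" .
  qed
  have c2: "\<forall>t\<ge>0. (eta A mu z k xs x has_real_derivative (z - W t)) (at t within {0..})"
  proof (intro allI impI)
    fix t :: real assume t: "0 \<le> t"
    have "((\<lambda>s. z * s - WI s + ln Pi0) has_real_derivative (z * 1 - W t + 0)) (at t within {0..})"
    proof -
      have d1: "((\<lambda>s. z * s) has_real_derivative z * 1) (at t within {0..})"
        by (intro DERIV_cmult DERIV_ident)
      show ?thesis by (intro derivative_intros d1 WI_deriv[OF t])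
    qed
    then have "((\<lambda>s. z * s - WI s + ln Pi0) has_real_derivative (z - W t)) (at t within {0..})" by simp
    then show "(eta A mu z k xs x has_real_derivative (z - W t)) (at t within {0..})"
      by (rule has_field_derivative_transform_within[where d=1]) (use t eta_t in auto)
  qed
  have c3: "\<forall>t\<ge>0. psi t = (LINT a:{0..A}|lborel. ktilde mu z k a * psi (t - a))"
  proof (intro allI impI)
    fix t :: real assume t: "0 \<le> t"
    have "(LINT a:{0..A}|lborel. ktilde mu z k a * psi (t - a)) = (LINT a|lborel. kt a * phi (t - a) / Pi0 - kt a)"
      unfolding set_lebesgue_integral_def psi_def kt_def
      by (intro arg_cong[where f="integral\<^sup>L lborel"]) (auto simp: fun_eq_iff indicator_def field_simps)
    also have "\<dots> = (LINT a|lborel. kt a * phi (t - a)) / Pi0 - (LINT a|lborel. kt a)"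
      using renew[OF t] kt_integrable by simp
    also have "(LINT a|lborel. kt a) = 1" using kt_one unfolding kt_def set_lebesgue_integral_def by simp
    finally show "psi t = (LINT a:{0..A}|lborel. ktilde mu z k a * psi (t - a))"
      unfolding psi_def using renew[OF t] by simp
  qed
  have Pi0x0: "Pi0 = PiF A mu z k xs x0"
  proof -
    have "(LINT a:{0..A}|lborel. pi0 A mu z k a * x a 0) = (LINT a:{0..A}|lborel. pi0 A mu z k a * x0 a)"
      unfolding set_lebesgue_integral_def
      by (simp only: real_scaleR_def) (rule integral_eq_except[of "{0, A}"], auto simp: init indicator_def)
    then show ?thesis unfolding Pi0_def PiF_def by simp
  qed
  have c4: "eta A mu z k xs x 0 = ln (PiF A mu z k xs x0)"
    unfolding eta_def using Pi0x0 Pi0_def by simp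
  have c5: "\<forall>a. 0 < a \<and> a < A \<longrightarrow> psi (- a) = x0 a / (xs a * PiF A mu z k xs x0) - 1"
  proof (intro allI impI)
    fix a :: real assume a: "0 < a \<and> a < A"
    have "psi (- a) = v a 0 / Pi0 - 1" unfolding psi_def using v_phi[of a 0] a by simp
    then show "psi (- a) = x0 a / (xs a * PiF A mu z k xs x0) - 1"
      unfolding v_def using E0 init a Pi0x0 by simp
  qed
  have c6: "\<forall>a t. 0 \<le> a \<and> a < A \<and> 0 \<le> t \<longrightarrow> x a t = xs a * (1 + psi (t - a)) * exp (eta A mu z k xs x t)"
  proof (intro allI impI)
    fix a t :: real assume h: "0 \<le> a \<and> a < A \<and> 0 \<le> t"
    have "exp (eta A mu z k xs x t) = E t * Pi0"
      unfolding eta_def using PiF_t h E_pos[of t] P0 by simp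
    moreover have "1 + psi (t - a) = v a t / Pi0" unfolding psi_def using v_phi h by simp
    ultimately have "xs a * (1 + psi (t - a)) * exp (eta A mu z k xs x t) = xs a * E t * v a t"
      using P0 by simp
    also have "\<dots> = x a t"
    proof -
      have "xs a > 0" using xs_pos h by simp
      then show ?thesis unfolding v_def using E_pos[of t] by simp
    qed
    finally show "x a t = xs a * (1 + psi (t - a)) * exp (eta A mu z k xs x t)" by simp
  qed
  show ?thesis using c1 c2 c3 c4 c5 c6 by blast
qed

end


theorem lemma3p1:
  fixes A ustar z1 z2 z3 :: real
    and u g1 g2 g3 mu1 mu2 mu3 k1 k2 k3 xs1 xs2 xs3 x10 x20 x30 :: "real \<Rightarrow> real"
    and x1 x2 x3 :: "real \<Rightarrow> real \<Rightarrow> real"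
  assumes A: "A > 0"
    and g: "L2on A g1" "L2on A g2" "L2on A g3"
    and g_nonneg: "\<forall>a\<in>{0..A}. g1 a \<ge> 0 \<and> g2 a \<ge> 0 \<and> g3 a \<ge> 0"
    and mu_nonneg: "\<forall>a\<in>{0..A}. mu1 a \<ge> 0 \<and> mu2 a \<ge> 0 \<and> mu3 a \<ge> 0"
    and mu_loc: "locint A mu1" "locint A mu2" "locint A mu3"
    and mu_inf: "(\<integral>\<^sup>+ a. ennreal (mu1 a) * indicator {0..A} a \<partial>lborel) = \<infinity>"
                "(\<integral>\<^sup>+ a. ennreal (mu2 a) * indicator {0..A} a \<partial>lborel) = \<infinity>"
                "(\<integral>\<^sup>+ a. ennreal (mu3 a) * indicator {0..A} a \<partial>lborel) = \<infinity>"
    and k: "Linfon A k1" "Linfon A k2" "Linfon A k3"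
    and k_nonneg: "\<forall>a\<in>{0..A}. k1 a \<ge> 0 \<and> k2 a \<ge> 0 \<and> k3 a \<ge> 0"
    and steady: "steady_profile A mu1 z1 xs1" "steady_profile A mu2 z2 xs2"
                "steady_profile A mu3 z3 xs3"
    and ktilde_one: "(LINT a:{0..A}|lborel. ktilde mu1 z1 k1 a) = 1"
                    "(LINT a:{0..A}|lborel. ktilde mu2 z2 k2 a) = 1"
                    "(LINT a:{0..A}|lborel. ktilde mu3 z3 k3 a) = 1"
    and zeta: "z1 = (LINT a:{0..A}|lborel. g1 a * xs2 a) + ustar"
              "z2 = (LINT a:{0..A}|lborel. g2 a * xs3 a)"
              "z3 = (LINT a:{0..A}|lborel. g3 a * xs1 a)"
    and u: "continuous_on {0..} u"
    and init: "L2on A x10" "L2on A x20" "L2on A x30"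
    and sol1: "char_solution A mu1 k1 (\<lambda>t. (LINT a:{0..A}|lborel. g1 a * x2 a t) + u t) x1 x10"
    and sol2: "char_solution A mu2 k2 (\<lambda>t. (LINT a:{0..A}|lborel. g2 a * x3 a t)) x2 x20"
    and sol3: "char_solution A mu3 k3 (\<lambda>t. (LINT a:{0..A}|lborel. g3 a * x1 a t)) x3 x30"
    and pos: "\<forall>a t. 0 \<le> a \<and> a < A \<and> 0 \<le> t \<longrightarrow> x1 a t > 0 \<and> x2 a t > 0 \<and> x3 a t > 0"
  shows "\<exists>psi1 psi2 psi3 :: real \<Rightarrow> real.
    \<comment> \<open>definition of psi_i(t-a) (well-defined)\<close>
    (\<forall>a t. 0 \<le> a \<and> a < A \<and> 0 \<le> t \<longrightarrow>
        psi1 (t - a) = x1 a t / (xs1 a * PiF A mu1 z1 k1 xs1 (\<lambda>b. x1 b t)) - 1 \<and>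
        psi2 (t - a) = x2 a t / (xs2 a * PiF A mu2 z2 k2 xs2 (\<lambda>b. x2 b t)) - 1 \<and>
        psi3 (t - a) = x3 a t / (xs3 a * PiF A mu3 z3 k3 xs3 (\<lambda>b. x3 b t)) - 1) \<and>
    \<comment> \<open>ODEs for eta_i\<close>
    (\<forall>t\<ge>0.
        (eta A mu1 z1 k1 xs1 x1 has_real_derivative
           (z1 - u t - exp (eta A mu2 z2 k2 xs2 x2 t)
                 * (LINT a:{0..A}|lborel. g1 a * xs2 a * (1 + psi2 (t - a))))) (at t within {0..}) \<and>
        (eta A mu2 z2 k2 xs2 x2 has_real_derivative
           (z2 - exp (eta A mu3 z3 k3 xs3 x3 t)
                 * (LINT a:{0..A}|lborel. g2 a * xs3 a * (1 + psi3 (t - a))))) (at t within {0..}) \<and>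
        (eta A mu3 z3 k3 xs3 x3 has_real_derivative
           (z3 - exp (eta A mu1 z1 k1 xs1 x1 t)
                 * (LINT a:{0..A}|lborel. g3 a * xs1 a * (1 + psi1 (t - a))))) (at t within {0..})) \<and>
    \<comment> \<open>renewal equations for psi_i\<close>
    (\<forall>t\<ge>0.
        psi1 t = (LINT a:{0..A}|lborel. ktilde mu1 z1 k1 a * psi1 (t - a)) \<and>
        psi2 t = (LINT a:{0..A}|lborel. ktilde mu2 z2 k2 a * psi2 (t - a)) \<and>
        psi3 t = (LINT a:{0..A}|lborel. ktilde mu3 z3 k3 a * psi3 (t - a))) \<and>
    \<comment> \<open>initial conditions\<close>
    eta A mu1 z1 k1 xs1 x1 0 = ln (PiF A mu1 z1 k1 xs1 x10) \<and>
    eta A mu2 z2 k2 xs2 x2 0 = ln (PiF A mu2 z2 k2 xs2 x20) \<and>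
    eta A mu3 z3 k3 xs3 x3 0 = ln (PiF A mu3 z3 k3 xs3 x30) \<and>
    (\<forall>a. 0 < a \<and> a < A \<longrightarrow>
        psi1 (- a) = x10 a / (xs1 a * PiF A mu1 z1 k1 xs1 x10) - 1 \<and>
        psi2 (- a) = x20 a / (xs2 a * PiF A mu2 z2 k2 xs2 x20) - 1 \<and>
        psi3 (- a) = x30 a / (xs3 a * PiF A mu3 z3 k3 xs3 x30) - 1) \<and>
    \<comment> \<open>representation of the solution\<close>
    (\<forall>a t. 0 \<le> a \<and> a < A \<and> 0 \<le> t \<longrightarrow>
        x1 a t = xs1 a * (1 + psi1 (t - a)) * exp (eta A mu1 z1 k1 xs1 x1 t) \<and>
        x2 a t = xs2 a * (1 + psi2 (t - a)) * exp (eta A mu2 z2 k2 xs2 x2 t) \<and>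
        x3 a t = xs3 a * (1 + psi3 (t - a)) * exp (eta A mu3 z3 k3 xs3 x3 t))"
proof -
  have c2: "continuous_on {0..} (\<lambda>t. LINT a:{0..A}|lborel. g1 a * x2 a t)"
    using sol2 unfolding char_solution_def by (intro cont_pair[OF g(1)]) auto
  have c3: "continuous_on {0..} (\<lambda>t. LINT a:{0..A}|lborel. g2 a * x3 a t)"
    using sol3 unfolding char_solution_def by (intro cont_pair[OF g(2)]) auto
  have c1: "continuous_on {0..} (\<lambda>t. LINT a:{0..A}|lborel. g3 a * x1 a t)"
    using sol1 unfolding char_solution_def by (intro cont_pair[OF g(3)]) auto
  interpret s1: sp A z1 mu1 k1 xs1 "\<lambda>t. (LINT a:{0..A}|lborel. g1 a * x2 a t) + u t" x10 x1
    by unfold_locales (use A mu_nonneg mu_loc k k_nonneg steady ktilde_one sol1 pos c2 u in \<open>auto intro: continuous_intros\<close>)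
  interpret s2: sp A z2 mu2 k2 xs2 "\<lambda>t. (LINT a:{0..A}|lborel. g2 a * x3 a t)" x20 x2
    by unfold_locales (use A mu_nonneg mu_loc k k_nonneg steady ktilde_one sol2 pos c3 in auto)
  interpret s3: sp A z3 mu3 k3 xs3 "\<lambda>t. (LINT a:{0..A}|lborel. g3 a * x1 a t)" x30 x3
    by unfold_locales (use A mu_nonneg mu_loc k k_nonneg steady ktilde_one sol3 pos c1 in auto)
  obtain psi1 where p1:
    "\<forall>a t. 0 \<le> a \<and> a < A \<and> 0 \<le> t \<longrightarrow> psi1 (t - a) = x1 a t / (xs1 a * PiF A mu1 z1 k1 xs1 (\<lambda>b. x1 b t)) - 1"
    "\<forall>t\<ge>0. (eta A mu1 z1 k1 xs1 x1 has_real_derivative (z1 - ((LINT a:{0..A}|lborel. g1 a * x2 a t) + u t))) (at t within {0..})"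
    "\<forall>t\<ge>0. psi1 t = (LINT a:{0..A}|lborel. ktilde mu1 z1 k1 a * psi1 (t - a))"
    "eta A mu1 z1 k1 xs1 x1 0 = ln (PiF A mu1 z1 k1 xs1 x10)"
    "\<forall>a. 0 < a \<and> a < A \<longrightarrow> psi1 (- a) = x10 a / (xs1 a * PiF A mu1 z1 k1 xs1 x10) - 1"
    "\<forall>a t. 0 \<le> a \<and> a < A \<and> 0 \<le> t \<longrightarrow> x1 a t = xs1 a * (1 + psi1 (t - a)) * exp (eta A mu1 z1 k1 xs1 x1 t)"
    using s1.species_main by blast
  obtain psi2 where p2:
    "\<forall>a t. 0 \<le> a \<and> a < A \<and> 0 \<le> t \<longrightarrow> psi2 (t - a) = x2 a t / (xs2 a * PiF A mu2 z2 k2 xs2 (\<lambda>b. x2 b t)) - 1"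
    "\<forall>t\<ge>0. (eta A mu2 z2 k2 xs2 x2 has_real_derivative (z2 - (LINT a:{0..A}|lborel. g2 a * x3 a t))) (at t within {0..})"
    "\<forall>t\<ge>0. psi2 t = (LINT a:{0..A}|lborel. ktilde mu2 z2 k2 a * psi2 (t - a))"
    "eta A mu2 z2 k2 xs2 x2 0 = ln (PiF A mu2 z2 k2 xs2 x20)"
    "\<forall>a. 0 < a \<and> a < A \<longrightarrow> psi2 (- a) = x20 a / (xs2 a * PiF A mu2 z2 k2 xs2 x20) - 1"
    "\<forall>a t. 0 \<le> a \<and> a < A \<and> 0 \<le> t \<longrightarrow> x2 a t = xs2 a * (1 + psi2 (t - a)) * exp (eta A mu2 z2 k2 xs2 x2 t)"
    using s2.species_main by blast
  obtain psi3 where p3: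
    "\<forall>a t. 0 \<le> a \<and> a < A \<and> 0 \<le> t \<longrightarrow> psi3 (t - a) = x3 a t / (xs3 a * PiF A mu3 z3 k3 xs3 (\<lambda>b. x3 b t)) - 1"
    "\<forall>t\<ge>0. (eta A mu3 z3 k3 xs3 x3 has_real_derivative (z3 - (LINT a:{0..A}|lborel. g3 a * x1 a t))) (at t within {0..})"
    "\<forall>t\<ge>0. psi3 t = (LINT a:{0..A}|lborel. ktilde mu3 z3 k3 a * psi3 (t - a))"
    "eta A mu3 z3 k3 xs3 x3 0 = ln (PiF A mu3 z3 k3 xs3 x30)"
    "\<forall>a. 0 < a \<and> a < A \<longrightarrow> psi3 (- a) = x30 a / (xs3 a * PiF A mu3 z3 k3 xs3 x30) - 1"
    "\<forall>a t. 0 \<le> a \<and> a < A \<and> 0 \<le> t \<longrightarrow> x3 a t = xs3 a * (1 + psi3 (t - a)) * exp (eta A mu3 z3 k3 xs3 x3 t)"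
    using s3.species_main by blast
  have rep: "(LINT a:{0..A}|lborel. g a * y a t) = exp (e t) * (LINT a:{0..A}|lborel. g a * ys a * (1 + p (t - a)))"
    if "0 \<le> t" "\<forall>a t. 0 \<le> a \<and> a < A \<and> 0 \<le> t \<longrightarrow> y a t = ys a * (1 + p (t - a)) * exp (e t)"
    for g ys p :: "real \<Rightarrow> real" and y :: "real \<Rightarrow> real \<Rightarrow> real" and e :: "real \<Rightarrow> real" and t :: real
  proof -
    have "(LINT a:{0..A}|lborel. g a * y a t) = (LINT a|lborel. exp (e t) * (indicator {0..A} a * (g a * ys a * (1 + p (t - a)))))"
      unfolding set_lebesgue_integral_def
      by (simp only: real_scaleR_def) (rule integral_eq_except[of "{A}"], use that in \<open>auto simp: indicator_def\<close>)
    then show ?thesis unfolding set_lebesgue_integral_def by simp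
  qed
  have d: "\<forall>t\<ge>0.
        (eta A mu1 z1 k1 xs1 x1 has_real_derivative
           (z1 - u t - exp (eta A mu2 z2 k2 xs2 x2 t)
                 * (LINT a:{0..A}|lborel. g1 a * xs2 a * (1 + psi2 (t - a))))) (at t within {0..}) \<and>
        (eta A mu2 z2 k2 xs2 x2 has_real_derivative
           (z2 - exp (eta A mu3 z3 k3 xs3 x3 t)
                 * (LINT a:{0..A}|lborel. g2 a * xs3 a * (1 + psi3 (t - a))))) (at t within {0..}) \<and>
        (eta A mu3 z3 k3 xs3 x3 has_real_derivative
           (z3 - exp (eta A mu1 z1 k1 xs1 x1 t)
                 * (LINT a:{0..A}|lborel. g3 a * xs1 a * (1 + psi1 (t - a))))) (at t within {0..})"
  proof (intro allI impI conjI)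
    fix t :: real assume t: "0 \<le> t"
    have r2: "(LINT a:{0..A}|lborel. g1 a * x2 a t) = exp (eta A mu2 z2 k2 xs2 x2 t) * (LINT a:{0..A}|lborel. g1 a * xs2 a * (1 + psi2 (t - a)))"
      by (rule rep[OF t p2(6)])
    have r3: "(LINT a:{0..A}|lborel. g2 a * x3 a t) = exp (eta A mu3 z3 k3 xs3 x3 t) * (LINT a:{0..A}|lborel. g2 a * xs3 a * (1 + psi3 (t - a)))"
      by (rule rep[OF t p3(6)])
    have r1: "(LINT a:{0..A}|lborel. g3 a * x1 a t) = exp (eta A mu1 z1 k1 xs1 x1 t) * (LINT a:{0..A}|lborel. g3 a * xs1 a * (1 + psi1 (t - a)))"
      by (rule rep[OF t p1(6)])
    show "(eta A mu1 z1 k1 xs1 x1 has_real_derivative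
           (z1 - u t - exp (eta A mu2 z2 k2 xs2 x2 t)
                 * (LINT a:{0..A}|lborel. g1 a * xs2 a * (1 + psi2 (t - a))))) (at t within {0..})"
    proof -
      have "z1 - ((LINT a:{0..A}|lborel. g1 a * x2 a t) + u t) = z1 - u t - exp (eta A mu2 z2 k2 xs2 x2 t)
                 * (LINT a:{0..A}|lborel. g1 a * xs2 a * (1 + psi2 (t - a)))"
        unfolding r2 by simp
      then show ?thesis using p1(2) t by metis
    qed
    show "(eta A mu2 z2 k2 xs2 x2 has_real_derivative
           (z2 - exp (eta A mu3 z3 k3 xs3 x3 t)
                 * (LINT a:{0..A}|lborel. g2 a * xs3 a * (1 + psi3 (t - a))))) (at t within {0..})"
      unfolding r3[symmetric] using p2(2) t by blast
    show "(eta A mu3 z3 k3 xs3 x3 has_real_derivative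
           (z3 - exp (eta A mu1 z1 k1 xs1 x1 t)
                 * (LINT a:{0..A}|lborel. g3 a * xs1 a * (1 + psi1 (t - a))))) (at t within {0..})"
      unfolding r1[symmetric] using p3(2) t by blast
  qed
  have q1: "\<forall>a t. 0 \<le> a \<and> a < A \<and> 0 \<le> t \<longrightarrow>
        psi1 (t - a) = x1 a t / (xs1 a * PiF A mu1 z1 k1 xs1 (\<lambda>b. x1 b t)) - 1 \<and>
        psi2 (t - a) = x2 a t / (xs2 a * PiF A mu2 z2 k2 xs2 (\<lambda>b. x2 b t)) - 1 \<and>
        psi3 (t - a) = x3 a t / (xs3 a * PiF A mu3 z3 k3 xs3 (\<lambda>b. x3 b t)) - 1"
    using p1(1) p2(1) p3(1) by blast
  have q3: "\<forall>t\<ge>0.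
        psi1 t = (LINT a:{0..A}|lborel. ktilde mu1 z1 k1 a * psi1 (t - a)) \<and>
        psi2 t = (LINT a:{0..A}|lborel. ktilde mu2 z2 k2 a * psi2 (t - a)) \<and>
        psi3 t = (LINT a:{0..A}|lborel. ktilde mu3 z3 k3 a * psi3 (t - a))"
    using p1(3) p2(3) p3(3) by blast
  have q5: "\<forall>a. 0 < a \<and> a < A \<longrightarrow>
        psi1 (- a) = x10 a / (xs1 a * PiF A mu1 z1 k1 xs1 x10) - 1 \<and>
        psi2 (- a) = x20 a / (xs2 a * PiF A mu2 z2 k2 xs2 x20) - 1 \<and>
        psi3 (- a) = x30 a / (xs3 a * PiF A mu3 z3 k3 xs3 x30) - 1"
    using p1(5) p2(5) p3(5) by blast
  have q6: "\<forall>a t. 0 \<le> a \<and> a < A \<and> 0 \<le> t \<longrightarrow>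
        x1 a t = xs1 a * (1 + psi1 (t - a)) * exp (eta A mu1 z1 k1 xs1 x1 t) \<and>
        x2 a t = xs2 a * (1 + psi2 (t - a)) * exp (eta A mu2 z2 k2 xs2 x2 t) \<and>
        x3 a t = xs3 a * (1 + psi3 (t - a)) * exp (eta A mu3 z3 k3 xs3 x3 t)"
    using p1(6) p2(6) p3(6) by blast
  show ?thesis
    apply (rule exI[of _ psi1], rule exI[of _ psi2], rule exI[of _ psi3])
    apply (intro conjI)
           apply (rule q1)
          apply (rule d)
         apply (rule q3)
        apply (rule p1(4))
       apply (rule p2(4))
      apply (rule p3(4))
     apply (rule q5)
    apply (rule q6)
    done
qed


end
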